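(* Let $f_1:\mathbb{R}^m\to(-\infty,+\infty]$ be proper convex lower semi-continuous and let $B\in\mathbb{R}^{m\times d}$ have full row rank. Let $f_2(x)=l(x)+\frac{\nu}{2}\|x\|_2^2$ with $l(x)=\frac1n\sum_{i=1}^n\phi_i(x)$, $\nu>0$, each $\phi_i:\mathbb{R}^d\to\mathbb{R}$ smooth and convex, and the $\nabla\phi_i$ uniformly bounded on $\mathbb{R}^d$. Let $M$ be a constant with $4\big(\sup_{i,x}\|\nabla l^{[i]}(x)\|_2^2+\|\nabla l(x^* )\|_2^2\big)\le M$. Let $x^*$ be a minimizer of $f_1(Bx)+f_2(x)$ and $v^*\in\mathbb{R}^m$ such that for every $k$, with $h_k(x)=\frac{\lambda}{\gamma_k}f_1(\frac{\gamma_k}{\lambda}x)$, $$v^*=(I-\mathrm{Prox}_{h_k})\Big(\tfrac{\lambda}{\gamma_k}B\big(x^*-\gamma_k\nabla f_2(x^* )\big)+(I-\lambda BB^T)v^*\Big),\qquad x^*=x^*-\gamma_k\nabla f_2(x^* )-\gamma_kB^Tv^*.$$ Let $(x_k,v_k)$ be generated by Algorithm 1 (described in the context) with $c>0$, $\alpha\in(0,1]$, $0<\lambda<1/\rho_{\max}(BB^T)$, and let $k_0>0$ be an integer such that $\gamma_{k_0}\le\min\{\frac{1}{2\nu},\frac{\lambda\rho_{\min}(BB^T)}{\nu}\}$. Setting $a_k=\mathbb{E}^{(k)}\big(\|x_k-x^*\|_2^2+\frac{\gamma_k^2}{\lambda}\|v_k-v^*\|_2^2\big)$, we have $$a_{k+1}\le(1-\nu\gamma_k)a_k+\gamma_k^2M\qquad\forall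 k\ge k_0.$$
   Context: $\mathrm{Prox}_f(y)=\arg\min_x\{f(x)+\frac12\|x-y\|_2^2\}$; $\rho_{\max}(BB^T),\rho_{\min}(BB^T)$ are the largest and smallest eigenvalues of $BB^T$. Fix a batch size $p$ dividing $n$; for $i\in\{1,\dots,n/p\}$, $\nabla l^{[i]}(x)=\frac1p\sum_{j=(i-1)p+1}^{ip}\nabla\phi_j(x)$ and $\nabla f_2^{[i]}(x)=\nabla l^{[i]}(x)+\nu x$. Algorithm 1: choose $x_1\in\mathbb{R}^d$, $v_1\in\mathbb{R}^m$; for $k=1,2,\dots$: $\gamma_k=c/k^\alpha$; draw $i_k$ from $\{1,\dots,n/p\}$, each with probability $p/n$, independently of the past; $x_{k+1/2}=x_k-\gamma_k\nabla f_2^{[i_k]}(x_k)$; $v_{k+1}=\frac{\lambda}{\gamma_k}\big(I-\mathrm{Prox}_{\frac{\gamma_k}{\lambda}f_1}\big)\big(Bx_{k+1/2}+(I-\lambda BB^T)\frac{\gamma_k}{\lambda}v_k\big)$; $x_{k+1}=x_{k+1/2}-\gamma_kB^Tv_{k+1}$. $\mathbb{E}^{(k)}$ denotes expectation with respect to all random indices drawn up to the $k$-th iterate. *)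

theory Defs
  imports "HOL-Analysis.Analysis" "HOL-Probability.Probability"
begin

definition proper_fun :: "('a \<Rightarrow> ereal) \<Rightarrow> bool" where
  "proper_fun f \<longleftrightarrow> (\<exists>x. f x < \<infinity>) \<and> (\<forall>x. f x > -\<infinity>)"

definition ereal_convex :: "('a::real_vector \<Rightarrow> ereal) \<Rightarrow> bool" where
  "ereal_convex f \<longleftrightarrow>
     (\<forall>x y u. 0 < u \<and> u < 1 \<longrightarrow>
        f (u *\<^sub>R x + (1 - u) *\<^sub>R y) \<le> ereal u * f x + ereal (1 - u) * f y)"

definition lsc :: "('a::topological_space \<Rightarrow> ereal) \<Rightarrow> bool" where
  "lsc f \<longleftrightarrow> (\<forall>x. f x \<le> Liminf (at x) f)"

definition prox :: "('a::real_normed_vector \<Rightarrow> ereal) \<Rightarrow> 'a \<Rightarrow> 'a" where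
  "prox f y = (THE x. \<forall>z. f x + ereal (norm (x - y)^2 / 2) \<le> f z + ereal (norm (z - y)^2 / 2))"

definition eigvals :: "real^'n^'n \<Rightarrow> real set" where
  "eigvals A = {\<mu>. \<exists>x. x \<noteq> 0 \<and> A *v x = \<mu> *\<^sub>R x}"

definition rho_max :: "real^'n^'n \<Rightarrow> real" where
  "rho_max A = Max (eigvals A)"

definition rho_min :: "real^'n^'n \<Rightarrow> real" where
  "rho_min A = Min (eigvals A)"

text \<open>gphi j is the gradient of phi_j (j = 1..n).\<close>
definition grad_l :: "(nat \<Rightarrow> real^'d \<Rightarrow> real^'d) \<Rightarrow> nat \<Rightarrow> real^'d \<Rightarrow> real^'d" where
  "grad_l gphi n x = (1 / real n) *\<^sub>R (\<Sum>j=1..n. gphi j x)"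

definition grad_l_batch :: "(nat \<Rightarrow> real^'d \<Rightarrow> real^'d) \<Rightarrow> nat \<Rightarrow> nat \<Rightarrow> real^'d \<Rightarrow> real^'d" where
  "grad_l_batch gphi p i x = (1 / real p) *\<^sub>R (\<Sum>j=(i-1)*p+1..i*p. gphi j x)"

definition gamma :: "real \<Rightarrow> real \<Rightarrow> nat \<Rightarrow> real" where
  "gamma c \<alpha> k = c / (real k powr \<alpha>)"

definition alg1_step ::
  "(real^'m \<Rightarrow> ereal) \<Rightarrow> real^'d^'m \<Rightarrow> (nat \<Rightarrow> real^'d \<Rightarrow> real^'d) \<Rightarrow> nat \<Rightarrow> real \<Rightarrow> real
   \<Rightarrow> real \<Rightarrow> real \<Rightarrow> nat \<Rightarrow> nat \<Rightarrow> (real^'d) \<times> (real^'m) \<Rightarrow> (real^'d) \<times> (real^'m)" where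
  "alg1_step f1 B gphi p \<nu> lam c \<alpha> k i xv =
     (let x = fst xv; v = snd xv; \<gamma> = gamma c \<alpha> k;
          xh = x - \<gamma> *\<^sub>R (grad_l_batch gphi p i x + \<nu> *\<^sub>R x);
          u = B *v xh + (mat 1 - lam *\<^sub>R (B ** transpose B)) *v ((\<gamma> / lam) *\<^sub>R v);
          v' = (lam / \<gamma>) *\<^sub>R (u - prox (\<lambda>z. ereal (\<gamma> / lam) * f1 z) u);
          x' = xh - \<gamma> *\<^sub>R (transpose B *v v')
      in (x', v'))"

text \<open>alg1 ... idx k = (x_k, v_k) for k \<ge> 1; idx k is the index i_k drawn at iteration k.\<close>
fun alg1 ::
  "(real^'m \<Rightarrow> ereal) \<Rightarrow> real^'d^'m \<Rightarrow> (nat \<Rightarrow> real^'d \<Rightarrow> real^'d) \<Rightarrow> nat \<Rightarrow> real \<Rightarrow> real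
   \<Rightarrow> real \<Rightarrow> real \<Rightarrow> real^'d \<Rightarrow> real^'m \<Rightarrow> (nat \<Rightarrow> nat) \<Rightarrow> nat \<Rightarrow> (real^'d) \<times> (real^'m)" where
  "alg1 f1 B gphi p \<nu> lam c \<alpha> x1 v1 idx 0 = (x1, v1)"
| "alg1 f1 B gphi p \<nu> lam c \<alpha> x1 v1 idx (Suc 0) = (x1, v1)"
| "alg1 f1 B gphi p \<nu> lam c \<alpha> x1 v1 idx (Suc (Suc k)) =
     alg1_step f1 B gphi p \<nu> lam c \<alpha> (Suc k) (idx (Suc k)) (alg1 f1 B gphi p \<nu> lam c \<alpha> x1 v1 idx (Suc k))"

end

theory Submission
  imports Defs
begin

lemma expect_restrict:
  fixes P :: "'w measure" and I :: "nat \<Rightarrow> 'w \<Rightarrow> nat" and H :: "(nat \<Rightarrow> nat) \<Rightarrow> real"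
  assumes P: "prob_space P"
    and ind: "prob_space.indep_vars P (\<lambda>_. count_space UNIV) I {1..}"
    and rng: "\<And>k \<omega>. k \<ge> 1 \<Longrightarrow> \<omega> \<in> space P \<Longrightarrow> I k \<omega> \<in> {1..N}"
    and unif: "\<And>k i. k \<ge> 1 \<Longrightarrow> i \<in> {1..N} \<Longrightarrow> measure P {\<omega> \<in> space P. I k \<omega> = i} = q"
    and J: "finite J" "J \<subseteq> {1..}"
  shows "(\<integral>\<omega>. H (restrict (\<lambda>j. I j \<omega>) J) \<partial>P) = q ^ card J * (\<Sum>s\<in>PiE J (\<lambda>_. {1..N}). H s)"
proof -
  interpret prob_space P by (rule P)
  define S where "S = PiE J (\<lambda>_. {1..N::nat})"
  define A where "A s = {\<omega>\<in>space P. restrict (\<lambda>j. I j \<omega>) J = s}" for s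
  have finS: "finite S" unfolding S_def using J by (simp add: finite_PiE)
  have rv: "\<And>j. j \<in> {1..} \<Longrightarrow> I j \<in> measurable P (count_space UNIV)"
    using ind unfolding indep_vars_def2 by auto
  have Aeq: "A s = (if J = {} then space P else (\<Inter>j\<in>J. I j -` {s j} \<inter> space P))" if "s \<in> S" for s
    using that unfolding A_def S_def by (auto simp: restrict_def PiE_def extensional_def fun_eq_iff)
  have Ameas: "A s \<in> sets P" if "s \<in> S" for s
  proof (cases "J = {}")
    case True then show ?thesis using Aeq[OF that] by simp
  next
    case False
    have "\<And>j. j \<in> J \<Longrightarrow> I j -` {s j} \<inter> space P \<in> sets P"
      using rv J(2) by (auto intro!: measurable_sets)
    then have "(\<Inter>j\<in>J. I j -` {s j} \<inter> space P) \<in> sets P"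
      using False J(1) by (intro sets.finite_INT) auto
    then show ?thesis using Aeq[OF that] False by simp
  qed
  have Ameasure: "measure P (A s) = q ^ card J" if "s \<in> S" for s
  proof (cases "J = {}")
    case True then show ?thesis using Aeq[OF that] prob_space by simp
  next
    case False
    have isets: "indep_sets (\<lambda>i. {I i -` X \<inter> space P | X. X \<in> sets (count_space UNIV)}) {1..}"
      using ind unfolding indep_vars_def2 by auto
    have "prob (\<Inter>j\<in>J. I j -` {s j} \<inter> space P) = (\<Prod>j\<in>J. prob (I j -` {s j} \<inter> space P))"
      by (rule indep_setsD[OF isets J(2) False J(1)]) auto
    also have "\<dots> = (\<Prod>j\<in>J. q)"
    proof (rule prod.cong[OF refl])
      fix j assume j: "j \<in> J"
      have "s j \<in> {1..N}" using that j unfolding S_def by auto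
      moreover have "I j -` {s j} \<inter> space P = {\<omega> \<in> space P. I j \<omega> = s j}" by auto
      ultimately show "prob (I j -` {s j} \<inter> space P) = q" using unif[of j "s j"] j J(2) by auto
    qed
    finally show ?thesis using Aeq[OF that] False by simp
  qed
  have pt: "H (restrict (\<lambda>j. I j \<omega>) J) = (\<Sum>s\<in>S. H s * indicator (A s) \<omega>)" if w: "\<omega> \<in> space P" for \<omega>
  proof -
    have mem: "restrict (\<lambda>j. I j \<omega>) J \<in> S" unfolding S_def using rng w J(2) by auto
    have "(\<Sum>s\<in>S. H s * indicator (A s) \<omega>) = (\<Sum>s\<in>S. if s = restrict (\<lambda>j. I j \<omega>) J then H s else 0)"
      by (rule sum.cong) (auto simp: A_def indicator_def w)
    also have "\<dots> = H (restrict (\<lambda>j. I j \<omega>) J)" using mem finS by (simp add: sum.delta')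
    finally show ?thesis by simp
  qed
  have "(\<integral>\<omega>. H (restrict (\<lambda>j. I j \<omega>) J) \<partial>P) = (\<integral>\<omega>. (\<Sum>s\<in>S. H s * indicator (A s) \<omega>) \<partial>P)"
    by (rule Bochner_Integration.integral_cong[OF refl]) (simp add: pt)
  also have "\<dots> = (\<Sum>s\<in>S. (\<integral>\<omega>. H s * indicator (A s) \<omega> \<partial>P))"
    by (rule Bochner_Integration.integral_sum[where f="\<lambda>s \<omega>. H s * indicator (A s) \<omega>"]) (auto intro!: integrable_mult_right integrable_real_indicator Ameas simp: less_top[symmetric])
  also have "\<dots> = (\<Sum>s\<in>S. H s * q ^ card J)"
    by (rule sum.cong[OF refl]) (simp add: Ameas Ameasure)
  finally show ?thesis by (simp add: S_def sum_distrib_left mult.commute)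
qed

definition lsc_ev :: "('a::topological_space \<Rightarrow> ereal) \<Rightarrow> bool" where
  "lsc_ev g \<longleftrightarrow> (\<forall>x c. c < g x \<longrightarrow> eventually (\<lambda>y. c < g y) (at x))"

lemma lsc_imp_lsc_ev: "lsc g \<Longrightarrow> lsc_ev g"
  unfolding lsc_def lsc_ev_def
proof (intro allI impI)
  fix x c assume "\<forall>x. g x \<le> Liminf (at x) g" "c < g x"
  then show "eventually (\<lambda>y. c < g y) (at x)" using le_Liminf_iff[of "g x" "at x" g] by blast
qed

lemma lsc_attains_min:
  fixes F :: "'a::metric_space \<Rightarrow> ereal"
  assumes K: "compact K" "K \<noteq> {}" and F: "lsc_ev F"
  shows "\<exists>p\<in>K. \<forall>z\<in>K. F p \<le> F z"
proof (rule ccontr)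
  assume "\<not> ?thesis"
  then have "\<forall>p\<in>K. \<exists>z\<in>K. F z < F p" by (auto simp: not_le)
  then have "\<forall>p\<in>K. \<exists>zr. fst zr \<in> K \<and> F (fst zr) < ereal (snd zr) \<and> ereal (snd zr) < F p"
    by (metis ereal_dense2 fst_conv snd_conv)
  then obtain zr where zr: "\<And>p. p \<in> K \<Longrightarrow> fst (zr p) \<in> K \<and> F (fst (zr p)) < ereal (snd (zr p)) \<and> ereal (snd (zr p)) < F p"
    by metis
  define z where "z p = fst (zr p)" for p
  define r where "r p = snd (zr p)" for p
  have zr': "\<And>p. p \<in> K \<Longrightarrow> z p \<in> K \<and> F (z p) < ereal (r p) \<and> ereal (r p) < F p"
    using zr unfolding z_def r_def by auto
  have "\<forall>p\<in>K. \<exists>U. open U \<and> p \<in> U \<and> (\<forall>y\<in>U. ereal (r p) < F y)"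
  proof
    fix p assume p: "p \<in> K"
    have "eventually (\<lambda>y. ereal (r p) < F y) (at p)"
      using F zr'[OF p] unfolding lsc_ev_def by blast
    then obtain U where U: "open U" "p \<in> U" "\<And>y. y \<in> U \<Longrightarrow> y \<noteq> p \<Longrightarrow> ereal (r p) < F y"
      unfolding eventually_at_topological by blast
    show "\<exists>U. open U \<and> p \<in> U \<and> (\<forall>y\<in>U. ereal (r p) < F y)"
      using U zr'[OF p] by (intro exI[of _ U]) auto
  qed
  then obtain U where U: "\<And>p. p \<in> K \<Longrightarrow> open (U p) \<and> p \<in> U p \<and> (\<forall>y\<in>U p. ereal (r p) < F y)"
    by metis
  have "K \<subseteq> (\<Union>p\<in>K. U p)" using U by auto
  then obtain D where D: "D \<subseteq> K" "finite D" "K \<subseteq> (\<Union>p\<in>D. U p)"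
    using compactE_image[OF K(1), of K U] U by metis
  have "D \<noteq> {}" using D K(2) by auto
  then obtain p0 where p0: "p0 \<in> D" "\<And>p. p \<in> D \<Longrightarrow> r p0 \<le> r p"
    using D(2) by (metis (no_types, lifting) arg_min_if_finite(1) arg_min_least)
  have "z p0 \<in> K" using zr' p0 D by auto
  then obtain p' where p': "p' \<in> D" "z p0 \<in> U p'" using D by auto
  have "ereal (r p') < F (z p0)" using U p' D by auto
  moreover have "F (z p0) < ereal (r p0)" using zr' p0 D by auto
  moreover have "ereal (r p0) \<le> ereal (r p')" using p0(2)[OF p'(1)] by simp
  ultimately show False by (meson less_le_trans less_trans less_irrefl)
qed

lemma lsc_ev_add_quad:
  fixes g :: "'a::real_normed_vector \<Rightarrow> ereal"
  assumes g: "lsc_ev g" and ninf: "\<And>x. g x > -\<infinity>"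
  shows "lsc_ev (\<lambda>z. g z + ereal (norm (z - w)^2 / 2))"
  unfolding lsc_ev_def
proof (intro allI impI)
  fix x c
  define q where "q z = norm (z - w)^2 / 2" for z
  assume c: "c < g x + ereal (norm (x - w)^2 / 2)"
  have qt: "(q \<longlongrightarrow> q x) (at x)" unfolding q_def by (intro tendsto_intros) auto
  show "eventually (\<lambda>y. c < g y + ereal (norm (y - w)^2 / 2)) (at x)"
  proof (cases c)
    case MInf
    have "\<forall>y. -\<infinity> < g y + ereal (norm (y - w)^2 / 2)"
    proof
      fix y show "-\<infinity> < g y + ereal (norm (y - w)^2 / 2)" using ninf[of y] by (cases "g y") auto
    qed
    then show ?thesis using MInf by (intro always_eventually) simp
  next
    case PInf then show ?thesis using c by simp
  next
    case (real r)
    obtain \<delta> where \<delta>: "\<delta> > 0" "ereal (r - q x + \<delta>) < g x"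
    proof (cases "g x")
      case (real t)
      then have "r < t + q x" using c \<open>c = ereal r\<close> by (simp add: q_def)
      moreover have "r - q x + (t + q x - r)/2 < t" using \<open>r < t + q x\<close> by (simp add: field_simps)
      ultimately show ?thesis using real by (intro that[of "(t + q x - r)/2"]) auto
    next
      case PInf then show ?thesis by (intro that[of 1]) auto
    next
      case MInf then show ?thesis using ninf[of x] by simp
    qed
    have e1: "eventually (\<lambda>y. ereal (r - q x + \<delta>) < g y) (at x)" using g \<delta> unfolding lsc_ev_def by blast
    have e2: "eventually (\<lambda>y. q x - \<delta> < q y) (at x)" using order_tendstoD(1)[OF qt, of "q x - \<delta>"] \<delta> by simp
    show ?thesis
    proof (rule eventually_mono[OF eventually_conj[OF e1 e2]])
      fix y assume y: "ereal (r - q x + \<delta>) < g y \<and> q x - \<delta> < q y"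
      show "c < g y + ereal (norm (y - w)^2 / 2)"
      proof (cases "g y")
        case (real t) then show ?thesis using y \<open>c = ereal r\<close> by (simp add: q_def)
      next
        case PInf then show ?thesis using \<open>c = ereal r\<close> by simp
      next
        case MInf then show ?thesis using ninf[of y] by simp
      qed
    qed
  qed
qed

lemma proper_finite:
  assumes "proper_fun g" "g z \<noteq> \<infinity>" shows "g z = ereal (real_of_ereal (g z))"
  using assms unfolding proper_fun_def by (cases "g z") auto

lemma prox_exists:
  fixes g :: "'a::euclidean_space \<Rightarrow> ereal"
  assumes pr: "proper_fun g" and cv: "ereal_convex g" and ls: "lsc_ev g"
  shows "\<exists>p. \<forall>z. g p + ereal (norm (p - w)^2 / 2) \<le> g z + ereal (norm (z - w)^2 / 2)"
proof -
  define F where "F z = g z + ereal (norm (z - w)^2 / 2)" for z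
  have ninf: "\<And>x. g x > -\<infinity>" using pr unfolding proper_fun_def by auto
  have cvI: "\<And>x y u. 0 < u \<Longrightarrow> u < 1 \<Longrightarrow> g (u *\<^sub>R x + (1 - u) *\<^sub>R y) \<le> ereal u * g x + ereal (1 - u) * g y"
    using cv unfolding ereal_convex_def by simp
  obtain x0 where x0: "g x0 < \<infinity>" using pr unfolding proper_fun_def by auto
  obtain g0 where g0: "g x0 = ereal g0" using x0 ninf[of x0] by (cases "g x0") auto
  obtain p1 where p1: "p1 \<in> cball x0 1" "\<And>z. z \<in> cball x0 1 \<Longrightarrow> g p1 \<le> g z"
    using lsc_attains_min[OF compact_cball _ ls, of x0 1] by auto
  have "g p1 \<le> g x0" using p1 by simp
  then obtain m1 where m1: "g p1 = ereal m1" "m1 \<le> g0" using ninf[of p1] g0 by (cases "g p1") auto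
  define L where "L = g0 - m1"
  have L0: "L \<ge> 0" using m1 unfolding L_def by simp
  have lowb: "ereal (g0 - L * (1 + norm (y - x0))) \<le> g y" for y
  proof -
    define r where "r = norm (y - x0)"
    show ?thesis
    proof (cases "r \<le> 1")
      case True
      then have "g p1 \<le> g y" using p1(2)[of y] by (simp add: r_def dist_norm norm_minus_commute)
      moreover have "L * r \<ge> 0" using L0 r_def by simp
      then have "g0 - L * (1 + r) \<le> m1" unfolding L_def by (simp add: algebra_simps)
      ultimately show ?thesis using m1 r_def by (metis ereal_less_eq(3) order_trans)
    next
      case False
      show ?thesis
      proof (cases "g y")
        case PInf then show ?thesis by simp
      next
        case MInf then show ?thesis using ninf[of y] by simp
      next
        case (real t)
        define u where "u = 1 / r"
        have r1: "r > 1" using False by simp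
        have u01: "0 < u" "u < 1" using r1 unfolding u_def by auto
        define z where "z = u *\<^sub>R y + (1 - u) *\<^sub>R x0"
        have "z - x0 = u *\<^sub>R (y - x0)" unfolding z_def by (simp add: algebra_simps)
        then have "norm (z - x0) = 1" using u01 r1 unfolding u_def r_def by simp
        then have "z \<in> cball x0 1" by (simp add: dist_norm norm_minus_commute)
        then have "ereal m1 \<le> g z" using p1(2) m1 by metis
        also have "g z \<le> ereal u * g y + ereal (1 - u) * g x0"
          unfolding z_def by (rule cvI[OF u01])
        also have "\<dots> = ereal (u * t + (1 - u) * g0)" using real g0 by simp
        finally have "m1 \<le> u * t + (1 - u) * g0" by simp
        then have "r * m1 \<le> r * (u * t + (1 - u) * g0)" using r1 by (simp add: mult_left_mono)
        also have "\<dots> = t + (r - 1) * g0" using r1 unfolding u_def by (simp add: field_simps)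
        finally have "r * m1 \<le> t + (r - 1) * g0" .
        then have "g0 - L * (1 + r) \<le> t" unfolding L_def using m1(2)
          by (simp add: algebra_simps)
        then show ?thesis using real r_def by simp
      qed
    qed
  qed
  define d where "d = norm (x0 - w)"
  define R where "R = 2 * (d + L) + 2"
  have lsF: "lsc_ev F" unfolding F_def by (rule lsc_ev_add_quad[OF ls ninf])
  have "x0 \<in> cball x0 R" unfolding R_def d_def using L0 by simp
  then have "cball x0 R \<noteq> {}" by auto
  then obtain p where p: "p \<in> cball x0 R" "\<And>z. z \<in> cball x0 R \<Longrightarrow> F p \<le> F z"
    using lsc_attains_min[OF compact_cball _ lsF, of x0 R] by auto
  have "\<forall>z. F p \<le> F z"
  proof
    fix z show "F p \<le> F z"
    proof (cases "z \<in> cball x0 R")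
      case True then show ?thesis using p by auto
    next
      case False
      define r where "r = norm (z - x0)"
      have rR: "r > R" using False unfolding r_def by (simp add: dist_norm norm_minus_commute)
      have d0: "d \<ge> 0" unfolding d_def by simp
      have "r - d \<le> norm (z - w)" unfolding r_def d_def using norm_triangle_ineq4[of "z - w" "x0 - w"]
        by (simp add: algebra_simps)
      moreover have "r - d \<ge> 0" using rR d0 L0 unfolding R_def by simp
      ultimately have sq: "(r - d)^2 \<le> norm (z - w)^2" by (simp add: power_mono)
      have key: "g0 + d^2/2 < g0 - L * (1 + r) + (r - d)^2 / 2"
      proof -
        have "r / 2 - d - L > 1" using rR unfolding R_def by simp
        moreover have "r > 0" using rR L0 d0 unfolding R_def by simp
        ultimately have "r * (r / 2 - d - L) > r * 1" by (intro mult_strict_left_mono) auto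
        moreover have "r > L" using rR L0 d0 unfolding R_def by simp
        ultimately show ?thesis by (simp add: power2_eq_square algebra_simps)
      qed
      have "F p \<le> F x0" using p(2)[of x0] L0 d0 unfolding R_def by simp
      also have "F x0 = ereal (g0 + d^2/2)" unfolding F_def d_def using g0 by simp
      also have "\<dots> \<le> ereal (g0 - L * (1 + r)) + ereal (norm (z - w)^2 / 2)"
        using key sq by simp
      also have "\<dots> \<le> F z" unfolding F_def using lowb[of z] r_def by (intro add_mono) auto
      finally show ?thesis .
    qed
  qed
  then show ?thesis unfolding F_def by (intro exI[of _ p]) auto
qed

lemma parallelogram_half:
  fixes x y :: "'a::real_inner"
  shows "norm ((1/2) *\<^sub>R (x + y))^2 = (norm x^2 + norm y^2) / 2 - norm (x - y)^2 / 4"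
proof -
  have h1: "norm ((1/2) *\<^sub>R (x + y))^2 = norm (x + y)^2 / 4" by (simp add: power2_eq_square)
  have h2: "norm (x + y)^2 = norm x^2 + 2 * inner x y + norm y^2"
    by (simp add: power2_norm_eq_inner inner_add_left inner_add_right inner_commute algebra_simps)
  have h3: "norm (x - y)^2 = norm x^2 - 2 * inner x y + norm y^2"
    by (simp add: power2_norm_eq_inner inner_diff_left inner_diff_right inner_commute algebra_simps)
  show ?thesis using h1 h2 h3 by argo
qed

lemma norm_add_sq:
  fixes x y :: "'a::real_inner"
  shows "norm (x + y)^2 = norm x^2 + 2 * inner x y + norm y^2"
  by (simp add: power2_norm_eq_inner inner_add_left inner_add_right inner_commute algebra_simps)

lemma prox_unique:
  fixes g :: "'a::euclidean_space \<Rightarrow> ereal"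
  assumes pr: "proper_fun g" and cv: "ereal_convex g"
    and p: "\<forall>z. g p + ereal (norm (p - w)^2 / 2) \<le> g z + ereal (norm (z - w)^2 / 2)"
    and q: "\<forall>z. g q + ereal (norm (q - w)^2 / 2) \<le> g z + ereal (norm (z - w)^2 / 2)"
  shows "p = q"
proof -
  have ninf: "\<And>x. g x > -\<infinity>" using pr unfolding proper_fun_def by auto
  obtain x0 where x0: "g x0 < \<infinity>" using pr unfolding proper_fun_def by auto
  have fin: "g y \<noteq> \<infinity>" if "\<forall>z. g y + ereal (norm (y - w)^2 / 2) \<le> g z + ereal (norm (z - w)^2 / 2)" for y
  proof
    assume "g y = \<infinity>"
    then have "\<infinity> \<le> g x0 + ereal (norm (x0 - w)^2 / 2)" using that by (metis PInfty_eq_infinity plus_ereal.simps(2))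
    then show False using x0 by (cases "g x0") auto
  qed
  obtain a where a: "g p = ereal a" using fin[OF p] ninf[of p] by (cases "g p") auto
  obtain b where b: "g q = ereal b" using fin[OF q] ninf[of q] by (cases "g q") auto
  have "g p + ereal (norm (p - w)^2 / 2) \<le> g q + ereal (norm (q - w)^2 / 2)" using p by blast
  moreover have "g q + ereal (norm (q - w)^2 / 2) \<le> g p + ereal (norm (p - w)^2 / 2)" using q by blast
  ultimately have eq: "a + norm (p - w)^2 / 2 = b + norm (q - w)^2 / 2" using a b by simp
  define c where "c = (1/2) *\<^sub>R p + (1 - 1/2) *\<^sub>R q"
  have "g c \<le> ereal (1/2) * g p + ereal (1 - 1/2) * g q"
    using cv unfolding ereal_convex_def c_def by (metis field_sum_of_halves less_add_same_cancel1 zero_less_divide_1_iff zero_less_numeral)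
  also have "\<dots> = ereal ((a + b) / 2)" using a b by (simp add: field_simps)
  finally have gc: "g c \<le> ereal ((a + b) / 2)" .
  have hw: "(1/2) *\<^sub>R w + (1/2) *\<^sub>R w = w" by (simp add: scaleR_add_left[symmetric])
  have cw: "c - w = (1/2) *\<^sub>R ((p - w) + (q - w))" unfolding c_def using hw
    by (simp add: algebra_simps)
  have nc: "norm (c - w)^2 = (norm (p - w)^2 + norm (q - w)^2) / 2 - norm (p - q)^2 / 4"
    unfolding cw parallelogram_half by simp
  have "g p + ereal (norm (p - w)^2 / 2) \<le> g c + ereal (norm (c - w)^2 / 2)" using p by blast
  also have "\<dots> \<le> ereal ((a + b) / 2) + ereal (norm (c - w)^2 / 2)" using gc by (intro add_mono) auto
  finally have "a + norm (p - w)^2 / 2 \<le> (a + b) / 2 + norm (c - w)^2 / 2" using a by simp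
  then have "norm (p - q)^2 \<le> 0" using eq nc by argo
  then show ?thesis by simp
qed

lemma prox_min:
  fixes g :: "'a::euclidean_space \<Rightarrow> ereal"
  assumes pr: "proper_fun g" and cv: "ereal_convex g" and ls: "lsc_ev g"
  shows "\<forall>z. g (prox g w) + ereal (norm (prox g w - w)^2 / 2) \<le> g z + ereal (norm (z - w)^2 / 2)"
proof -
  have "\<exists>!p. \<forall>z. g p + ereal (norm (p - w)^2 / 2) \<le> g z + ereal (norm (z - w)^2 / 2)"
    using prox_exists[OF pr cv ls, of w] prox_unique[OF pr cv] by blast
  then show ?thesis unfolding prox_def by (rule theI')
qed

lemma le_by_small:
  fixes X Y C :: real
  assumes C: "C \<ge> 0" and h: "\<And>t. 0 < t \<Longrightarrow> t < 1 \<Longrightarrow> X \<le> Y + t * C"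
  shows "X \<le> Y"
proof (rule ccontr)
  assume "\<not> X \<le> Y"
  then have XY: "X - Y > 0" by simp
  define t where "t = min (1/2) ((X - Y) / (C + 1))"
  have t0: "0 < t" "t < 1" unfolding t_def using XY C by auto
  have "t * C \<le> (X - Y) / (C + 1) * C" unfolding t_def using C by (intro mult_right_mono) auto
  also have "\<dots> < X - Y" using XY C by (simp add: field_simps)
  finally show False using h[OF t0] by simp
qed

lemma prox_vi:
  fixes g :: "'a::euclidean_space \<Rightarrow> ereal" and w z :: 'a
  assumes pr: "proper_fun g" and cv: "ereal_convex g" and ls: "lsc_ev g"
  defines "p \<equiv> prox g w"
  shows "g p \<noteq> \<infinity>"
    and "g z \<noteq> \<infinity> \<Longrightarrow> inner (w - p) (z - p) \<le> real_of_ereal (g z) - real_of_ereal (g p)"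
proof -
  have ninf: "\<And>x. g x > -\<infinity>" using pr unfolding proper_fun_def by auto
  have cvI: "\<And>x y u. 0 < u \<Longrightarrow> u < 1 \<Longrightarrow> g (u *\<^sub>R x + (1 - u) *\<^sub>R y) \<le> ereal u * g x + ereal (1 - u) * g y"
    using cv unfolding ereal_convex_def by simp
  have pm: "\<And>z. g p + ereal (norm (p - w)^2 / 2) \<le> g z + ereal (norm (z - w)^2 / 2)"
    using prox_min[OF pr cv ls, of w] unfolding p_def by blast
  obtain x0 where x0: "g x0 < \<infinity>" using pr unfolding proper_fun_def by auto
  show gp: "g p \<noteq> \<infinity>"
  proof
    assume "g p = \<infinity>"
    then have "\<infinity> \<le> g x0 + ereal (norm (x0 - w)^2 / 2)" using pm[of x0] by simp
    then show False using x0 by (cases "g x0") auto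
  qed
  obtain a where a: "g p = ereal a" using gp ninf[of p] by (cases "g p") auto
  assume gz: "g z \<noteq> \<infinity>"
  obtain b where b: "g z = ereal b" using gz ninf[of z] by (cases "g z") auto
  have main: "inner (w - p) (z - p) \<le> b - a + t * (norm (z - p)^2 / 2)" if t: "0 < t" "t < 1" for t
  proof -
    define zt where "zt = t *\<^sub>R z + (1 - t) *\<^sub>R p"
    have "g zt \<le> ereal t * g z + ereal (1 - t) * g p" unfolding zt_def by (rule cvI[OF t])
    also have "\<dots> = ereal (t * b + (1 - t) * a)" using a b by simp
    finally have gzt: "g zt \<le> ereal (t * b + (1 - t) * a)" .
    have "g p + ereal (norm (p - w)^2 / 2) \<le> g zt + ereal (norm (zt - w)^2 / 2)" by (rule pm)
    also have "\<dots> \<le> ereal (t * b + (1 - t) * a) + ereal (norm (zt - w)^2 / 2)" using gzt by (intro add_mono) auto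
    finally have ineq: "a + norm (p - w)^2 / 2 \<le> t * b + (1 - t) * a + norm (zt - w)^2 / 2" using a by simp
    have ztw: "zt - w = (p - w) + t *\<^sub>R (z - p)" unfolding zt_def by (simp add: algebra_simps)
    have "norm (zt - w)^2 = norm (p - w)^2 + 2 * t * inner (p - w) (z - p) + t^2 * norm (z - p)^2"
      unfolding ztw norm_add_sq using t by (simp add: power_mult_distrib)
    moreover have "(1 - t) * a = a - t * a" by (simp add: algebra_simps)
    ultimately have "t * a \<le> t * b + t * inner (p - w) (z - p) + t^2 * norm (z - p)^2 / 2"
      using ineq by linarith
    then have "t * a \<le> t * (b + inner (p - w) (z - p) + t * norm (z - p)^2 / 2)"
      by (simp add: algebra_simps power2_eq_square)
    then have "a \<le> b + inner (p - w) (z - p) + t * norm (z - p)^2 / 2" using t by simp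
    moreover have "inner (w - p) (z - p) = - inner (p - w) (z - p)"
      by (simp add: inner_diff_left)
    ultimately show ?thesis by simp
  qed
  have "inner (w - p) (z - p) \<le> b - a" by (rule le_by_small[of "norm (z - p)^2 / 2"]) (use main in auto)
  then show "inner (w - p) (z - p) \<le> real_of_ereal (g z) - real_of_ereal (g p)" using a b by simp
qed

lemma scaled_props:
  fixes f :: "'a::euclidean_space \<Rightarrow> ereal" and a b :: real
  assumes pr: "proper_fun f" and cv: "ereal_convex f" and ls: "lsc_ev f" and a: "a > 0" and b: "b > 0"
  shows "proper_fun (\<lambda>z. ereal a * f (b *\<^sub>R z))" "ereal_convex (\<lambda>z. ereal a * f (b *\<^sub>R z))"
    "lsc_ev (\<lambda>z. ereal a * f (b *\<^sub>R z))"
proof -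
  have ninf: "\<And>x. f x > -\<infinity>" using pr unfolding proper_fun_def by auto
  have mninf: "ereal a * T > -\<infinity>" if "T > -\<infinity>" for T using that a by (cases T) auto
  show "proper_fun (\<lambda>z. ereal a * f (b *\<^sub>R z))"
  proof -
    obtain x where x: "f x < \<infinity>" using pr unfolding proper_fun_def by auto
    have "f (b *\<^sub>R ((1/b) *\<^sub>R x)) = f x" using b by simp
    then have "ereal a * f (b *\<^sub>R ((1/b) *\<^sub>R x)) < \<infinity>" using x a by (cases "f x") auto
    then show ?thesis unfolding proper_fun_def using mninf ninf by blast
  qed
  show "ereal_convex (\<lambda>z. ereal a * f (b *\<^sub>R z))"
    unfolding ereal_convex_def
  proof (intro allI impI)
    fix x y :: 'a and u :: real assume u: "0 < u \<and> u < 1"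
    have "b *\<^sub>R (u *\<^sub>R x + (1 - u) *\<^sub>R y) = u *\<^sub>R (b *\<^sub>R x) + (1 - u) *\<^sub>R (b *\<^sub>R y)"
      by (simp add: algebra_simps)
    moreover have "f (u *\<^sub>R (b *\<^sub>R x) + (1 - u) *\<^sub>R (b *\<^sub>R y)) \<le> ereal u * f (b *\<^sub>R x) + ereal (1 - u) * f (b *\<^sub>R y)"
      using cv u unfolding ereal_convex_def by blast
    ultimately have "f (b *\<^sub>R (u *\<^sub>R x + (1 - u) *\<^sub>R y)) \<le> ereal u * f (b *\<^sub>R x) + ereal (1 - u) * f (b *\<^sub>R y)"
      by simp
    then have "ereal a * f (b *\<^sub>R (u *\<^sub>R x + (1 - u) *\<^sub>R y)) \<le> ereal a * (ereal u * f (b *\<^sub>R x) + ereal (1 - u) * f (b *\<^sub>R y))"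
      using a by (intro ereal_mult_left_mono) auto
    also have "\<dots> = ereal u * (ereal a * f (b *\<^sub>R x)) + ereal (1 - u) * (ereal a * f (b *\<^sub>R y))"
      using ninf[of "b *\<^sub>R x"] ninf[of "b *\<^sub>R y"] a u
      by (cases "f (b *\<^sub>R x)"; cases "f (b *\<^sub>R y)") (auto simp: algebra_simps)
    finally show "ereal a * f (b *\<^sub>R (u *\<^sub>R x + (1 - u) *\<^sub>R y)) \<le> ereal u * (ereal a * f (b *\<^sub>R x)) + ereal (1 - u) * (ereal a * f (b *\<^sub>R y))" .
  qed
  show "lsc_ev (\<lambda>z. ereal a * f (b *\<^sub>R z))"
    unfolding lsc_ev_def
  proof (intro allI impI)
    fix x :: 'a and c assume c: "c < ereal a * f (b *\<^sub>R x)"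
    have fl: "filterlim (\<lambda>y. b *\<^sub>R y) (at (b *\<^sub>R x)) (at x)"
      unfolding filterlim_at
    proof
      show "eventually (\<lambda>y. b *\<^sub>R y \<in> UNIV \<and> b *\<^sub>R y \<noteq> b *\<^sub>R x) (at x)"
        using b by (auto simp: eventually_at_filter)
      show "((\<lambda>y. b *\<^sub>R y) \<longlongrightarrow> b *\<^sub>R x) (at x)" by (intro tendsto_intros)
    qed
    show "eventually (\<lambda>y. c < ereal a * f (b *\<^sub>R y)) (at x)"
    proof (cases c)
      case MInf
      then show ?thesis using mninf ninf by (intro always_eventually) auto
    next
      case PInf then show ?thesis using c by simp
    next
      case (real r)
      have "ereal (r / a) < f (b *\<^sub>R x)"
        using c real a ninf[of "b *\<^sub>R x"] by (cases "f (b *\<^sub>R x)") (auto simp: field_simps)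
      then have "eventually (\<lambda>z. ereal (r / a) < f z) (at (b *\<^sub>R x))" using ls unfolding lsc_ev_def by blast
      then have ev: "eventually (\<lambda>y. ereal (r / a) < f (b *\<^sub>R y)) (at x)"
        using fl unfolding filterlim_iff by blast
      show ?thesis
      proof (rule eventually_mono[OF ev])
        fix y assume "ereal (r / a) < f (b *\<^sub>R y)"
        then show "c < ereal a * f (b *\<^sub>R y)" using real a
          by (cases "f (b *\<^sub>R y)") (auto simp: field_simps)
      qed
    qed
  qed
qed

lemma prox_mono:
  fixes f1 :: "'a::euclidean_space \<Rightarrow> ereal" and s :: real and u w :: 'a
  assumes pr: "proper_fun f1" and cv: "ereal_convex f1" and ls: "lsc_ev f1" and s: "s > 0"
  defines "v1 \<equiv> (1 / s) *\<^sub>R (u - prox (\<lambda>z. ereal s * f1 z) u)"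
    and "v2 \<equiv> w - prox (\<lambda>z. ereal (1 / s) * f1 (s *\<^sub>R z)) w"
  shows "norm (v1 - v2)^2 \<le> inner (v1 - v2) ((1 / s) *\<^sub>R (u - s *\<^sub>R w))"
proof -
  define g1 where "g1 = (\<lambda>z. ereal s * f1 z)"
  define g2 where "g2 = (\<lambda>z. ereal (1 / s) * f1 (s *\<^sub>R z))"
  have g1': "g1 = (\<lambda>z. ereal s * f1 (1 *\<^sub>R z))" unfolding g1_def by simp
  have P1: "proper_fun g1" "ereal_convex g1" "lsc_ev g1"
    unfolding g1' using scaled_props[OF pr cv ls s, of 1] by auto
  have P2: "proper_fun g2" "ereal_convex g2" "lsc_ev g2"
    unfolding g2_def using scaled_props[OF pr cv ls _ s, of "1/s"] s by auto
  define p where "p = prox g1 u"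
  define p2 where "p2 = prox g2 w"
  define P where "P = s *\<^sub>R p2"
  have v1: "v1 = (1 / s) *\<^sub>R (u - p)" unfolding v1_def p_def g1_def by simp
  have v2: "v2 = w - p2" unfolding v2_def p2_def g2_def by simp
  have gp: "g1 p \<noteq> \<infinity>" unfolding p_def by (rule prox_vi(1)[OF P1])
  have gp2: "g2 p2 \<noteq> \<infinity>" unfolding p2_def by (rule prox_vi(1)[OF P2])
  have ninf: "\<And>x. f1 x > -\<infinity>" using pr unfolding proper_fun_def by auto
  obtain F1 where F1: "f1 p = ereal F1" using gp ninf[of p] s unfolding g1_def by (cases "f1 p") auto
  have "f1 P \<noteq> \<infinity>" using gp2 s unfolding g2_def P_def by (cases "f1 (s *\<^sub>R p2)") auto
  then obtain F2 where F2: "f1 P = ereal F2" using ninf[of P] by (cases "f1 P") auto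
  have "g1 P \<noteq> \<infinity>" unfolding g1_def using F2 by simp
  then have vi1: "inner (u - p) (P - p) \<le> real_of_ereal (g1 P) - real_of_ereal (g1 p)"
    unfolding p_def by (rule prox_vi(2)[OF P1])
  then have vi1': "inner (u - p) (P - p) \<le> s * F2 - s * F1" unfolding g1_def using F1 F2 by simp
  have pp: "s *\<^sub>R ((1 / s) *\<^sub>R p) = p" using s by simp
  have "g2 ((1 / s) *\<^sub>R p) \<noteq> \<infinity>" unfolding g2_def using F1 pp by simp
  then have vi2: "inner (w - p2) ((1 / s) *\<^sub>R p - p2) \<le> real_of_ereal (g2 ((1 / s) *\<^sub>R p)) - real_of_ereal (g2 p2)"
    unfolding p2_def by (rule prox_vi(2)[OF P2])
  then have vi2': "inner (w - p2) ((1 / s) *\<^sub>R p - p2) \<le> F1 / s - F2 / s"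
    unfolding g2_def using F1 F2 pp unfolding P_def by simp
  have e1: "inner (u - p) (P - p) = s * inner v1 (P - p)" unfolding v1 using s by simp
  have e2: "(1 / s) *\<^sub>R p - p2 = (1 / s) *\<^sub>R (p - P)" unfolding P_def using s by (simp add: algebra_simps)
  have e2': "inner (w - p2) ((1 / s) *\<^sub>R p - p2) = (1 / s) * inner v2 (p - P)" unfolding e2 v2 by simp
  have i1: "inner v1 (P - p) \<le> F2 - F1" using vi1' e1 s
    by (simp add: right_diff_distrib[symmetric] mult_le_cancel_left_pos)
  have i2: "inner v2 (p - P) \<le> F1 - F2" using vi2' e2' s
    by (simp add: diff_divide_distrib[symmetric] divide_le_cancel)
  have "inner v1 (P - p) + inner v2 (p - P) \<le> 0" using i1 i2 by simp
  then have mono: "inner (v1 - v2) (p - P) \<ge> 0"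
    by (simp add: inner_diff_left inner_diff_right)
  have pu: "p = u - s *\<^sub>R v1" unfolding v1 using s by simp
  have Pw: "P = s *\<^sub>R (w - v2)" unfolding P_def v2 by simp
  have "p - P = (u - s *\<^sub>R w) - s *\<^sub>R (v1 - v2)" unfolding pu Pw by (simp add: algebra_simps)
  then have "inner (v1 - v2) (p - P) = inner (v1 - v2) (u - s *\<^sub>R w) - s * norm (v1 - v2)^2"
    by (simp add: inner_diff_right power2_norm_eq_inner)
  with mono have "s * norm (v1 - v2)^2 \<le> inner (v1 - v2) (u - s *\<^sub>R w)" by simp
  then have "norm (v1 - v2)^2 \<le> (1 / s) * inner (v1 - v2) (u - s *\<^sub>R w)" using s
    by (simp add: field_simps)
  then show ?thesis by simp
qed

lemma inner_Bv:
  fixes B :: "real^'d^'m"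
  shows "inner (B *v x) y = inner x (transpose B *v y)"
  by (metis dot_lmul_matrix vector_transpose_matrix)

lemma BBt_v:
  fixes B :: "real^'d^'m"
  shows "(B ** transpose B) *v u = B *v (transpose B *v u)"
  by (rule matrix_vector_mul_assoc[symmetric])

lemma quad_BBt:
  fixes B :: "real^'d^'m"
  shows "inner u ((B ** transpose B) *v u) = norm (transpose B *v u)^2"
  unfolding BBt_v by (simp add: inner_commute[of u] inner_Bv power2_norm_eq_inner)

lemma sym_BBt:
  fixes B :: "real^'d^'m"
  shows "inner x ((B ** transpose B) *v y) = inner ((B ** transpose B) *v x) y"
proof -
  have 1: "inner x (B *v (transpose B *v y)) = inner (transpose B *v y) (transpose B *v x)"
    by (subst inner_commute) (rule inner_Bv)
  have 2: "inner (B *v (transpose B *v x)) y = inner (transpose B *v x) (transpose B *v y)"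
    by (rule inner_Bv)
  show ?thesis unfolding BBt_v 1 2 by (rule inner_commute)
qed

lemma min_eigen:
  fixes L :: "'a::real_inner \<Rightarrow> 'a"
  assumes lin: "linear L" and sym: "\<And>x y. inner x (L y) = inner (L x) y"
    and lb: "\<And>u. \<mu> * norm u^2 \<le> inner u (L u)" and eq: "inner e (L e) = \<mu> * norm e^2"
  shows "L e = \<mu> *\<^sub>R e"
proof -
  define h where "h = L e - \<mu> *\<^sub>R e"
  define \<psi> where "\<psi> u = inner u (L u) - \<mu> * norm u^2" for u
  have \<psi>0: "\<psi> u \<ge> 0" for u using lb[of u] unfolding \<psi>_def by simp
  have hh: "inner h h = inner h (L e) - \<mu> * inner e h"
  proof -
    have "inner h (L e - \<mu> *\<^sub>R e) = inner h (L e) - \<mu> * inner h e" by (simp add: inner_diff_right)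
    moreover have "L e - \<mu> *\<^sub>R e = h" unfolding h_def ..
    moreover have "inner h e = inner e h" by (rule inner_commute)
    ultimately show ?thesis by simp
  qed
  have exp: "\<psi> (e + t *\<^sub>R h) = \<psi> e + 2 * t * inner h h + t^2 * \<psi> h" for t
  proof -
    have Le: "L (e + t *\<^sub>R h) = L e + t *\<^sub>R L h" using lin by (simp add: linear_add linear_scale)
    have s1: "inner e (L h) = inner h (L e)" using sym[of e h] by (simp add: inner_commute)
    have A0: "inner (e + t *\<^sub>R h) (L e + t *\<^sub>R L h) = inner e (L e) + t * inner e (L h) + t * inner h (L e) + t^2 * inner h (L h)"
      by (simp add: inner_add_left inner_add_right power2_eq_square algebra_simps)
    have A: "inner (e + t *\<^sub>R h) (L (e + t *\<^sub>R h)) = inner e (L e) + 2 * t * inner h (L e) + t^2 * inner h (L h)"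
      unfolding Le A0 s1 by simp
    have nn: "norm (e + t *\<^sub>R h)^2 = norm e^2 + 2 * t * inner e h + t^2 * norm h^2"
      by (simp add: norm_add_sq power_mult_distrib)
    have "\<psi> (e + t *\<^sub>R h) = \<psi> e + 2 * t * (inner h (L e) - \<mu> * inner e h) + t^2 * \<psi> h"
      unfolding \<psi>_def A nn by (simp add: algebra_simps)
    then show ?thesis unfolding hh .
  qed
  have pe: "\<psi> e = 0" unfolding \<psi>_def using eq by simp
  have hle: "inner h h \<le> 0 + t * (\<psi> h / 2)" if t: "0 < t" "t < 1" for t
  proof -
    have "0 \<le> \<psi> (e + (-t) *\<^sub>R h)" by (rule \<psi>0)
    also have "\<dots> = - 2 * t * inner h h + t^2 * \<psi> h" unfolding exp pe by simp
    finally have "2 * t * inner h h \<le> t * (t * \<psi> h)" by (simp add: power2_eq_square)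
    then have "2 * inner h h \<le> t * \<psi> h" using t by simp
    then show ?thesis by simp
  qed
  have "0 \<le> \<psi> h / 2" using \<psi>0[of h] by simp
  then have "inner h h \<le> 0" by (rule le_by_small[OF _ hle])
  then have "h = 0" by (meson inner_gt_zero_iff not_le)
  then show ?thesis unfolding h_def by simp
qed

lemma eigvals_finite:
  fixes B :: "real^'d^'m"
  shows "finite (eigvals (B ** transpose B))"
proof (rule ccontr)
  define S where "S = B ** transpose B"
  assume "\<not> finite (eigvals (B ** transpose B))"
  then have inf: "\<not> finite (eigvals S)" unfolding S_def .
  obtain F where F: "finite F" "card F = CARD('m) + 1" "F \<subseteq> eigvals S"
    using infinite_arbitrarily_large[OF inf] by blast
  define ev where "ev \<mu> = (SOME x. x \<noteq> 0 \<and> S *v x = \<mu> *\<^sub>R x)" for \<mu>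
  have ev: "ev \<mu> \<noteq> 0 \<and> S *v ev \<mu> = \<mu> *\<^sub>R ev \<mu>" if "\<mu> \<in> eigvals S" for \<mu>
    using that unfolding eigvals_def ev_def by (metis (mono_tags, lifting) mem_Collect_eq someI_ex)
  have orth: "inner (ev \<mu>) (ev \<eta>) = 0" if "\<mu> \<in> eigvals S" "\<eta> \<in> eigvals S" "\<mu> \<noteq> \<eta>" for \<mu> \<eta>
  proof -
    have "\<mu> * inner (ev \<mu>) (ev \<eta>) = inner (S *v ev \<mu>) (ev \<eta>)" using ev[OF that(1)] by simp
    also have "\<dots> = inner (ev \<mu>) (S *v ev \<eta>)" unfolding S_def by (rule sym_BBt[symmetric])
    also have "\<dots> = \<eta> * inner (ev \<mu>) (ev \<eta>)" using ev[OF that(2)] by simp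
    finally show ?thesis using that(3) by simp
  qed
  have inj: "inj_on ev F"
  proof (rule inj_onI)
    fix \<mu> \<eta> assume a: "\<mu> \<in> F" "\<eta> \<in> F" "ev \<mu> = ev \<eta>"
    show "\<mu> = \<eta>"
    proof (rule ccontr)
      assume "\<mu> \<noteq> \<eta>"
      then have "inner (ev \<mu>) (ev \<mu>) = 0" using orth[of \<mu> \<eta>] a F(3) by auto
      then show False using ev[of \<mu>] a F(3) by auto
    qed
  qed
  have "pairwise orthogonal (ev ` F)"
  proof (rule pairwiseI)
    fix x y assume xy: "x \<in> ev ` F" "y \<in> ev ` F" "x \<noteq> y"
    then obtain \<mu> \<eta> where me: "\<mu> \<in> F" "\<eta> \<in> F" "x = ev \<mu>" "y = ev \<eta>" by auto
    then have "\<mu> \<noteq> \<eta>" using xy(3) by auto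
    then show "orthogonal x y" unfolding orthogonal_def me using orth[of \<mu> \<eta>] me F(3) by auto
  qed
  moreover have "0 \<notin> ev ` F" using ev F(3) by auto
  ultimately have "independent (ev ` F)" by (rule pairwise_orthogonal_independent)
  then have "card (ev ` F) \<le> DIM(real^'m)" using independent_bound[of "ev ` F"] by blast
  moreover have "card (ev ` F) = CARD('m) + 1" using card_image[OF inj] F(2) by simp
  ultimately show False by simp
qed

lemma spectral_bounds:
  fixes B :: "real^'d^'m" and lam :: real
  assumes lam: "0 < lam" "lam < 1 / rho_max (B ** transpose B)"
  shows "\<And>u. lam * norm (transpose B *v u)^2 \<le> norm u^2"
    and "\<And>u. rho_min (B ** transpose B) * norm u^2 \<le> norm (transpose B *v u)^2"
proof -
  define S where "S = B ** transpose B"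
  define Q where "Q u = norm (transpose B *v u)^2" for u :: "real^'m"
  have Qs: "Q (c *\<^sub>R u) = c^2 * Q u" for c u unfolding Q_def
    by (simp add: matrix_vector_mult_scaleR power_mult_distrib)
  have Qc: "continuous_on UNIV Q" unfolding Q_def
    by (intro continuous_intros)
  have sne: "sphere (0::real^'m) 1 \<noteq> {}"
  proof -
    obtain b :: "real^'m" where "b \<in> Basis" using nonempty_Basis by blast
    then have "norm b = 1" by simp
    then show ?thesis by (auto simp: sphere_def)
  qed
  have scale: "\<mu> * norm u^2 \<le> Q u" if h: "\<And>v. norm v = 1 \<Longrightarrow> \<mu> \<le> Q v" for \<mu> u
  proof (cases "u = 0")
    case True then show ?thesis by (simp add: Q_def)
  next
    case False
    have "\<mu> \<le> Q ((1 / norm u) *\<^sub>R u)" using h False by simp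
    also have "\<dots> = Q u / norm u^2" unfolding Qs by (simp add: power_divide)
    finally show ?thesis using False by (simp add: field_simps)
  qed
  have scale2: "Q u \<le> \<mu> * norm u^2" if h: "\<And>v. norm v = 1 \<Longrightarrow> Q v \<le> \<mu>" for \<mu> u
  proof (cases "u = 0")
    case True then show ?thesis by (simp add: Q_def)
  next
    case False
    have "Q ((1 / norm u) *\<^sub>R u) \<le> \<mu>" using h False by simp
    moreover have "Q ((1 / norm u) *\<^sub>R u) = Q u / norm u^2" unfolding Qs by (simp add: power_divide)
    ultimately show ?thesis using False by (simp add: field_simps)
  qed
  have fin: "finite (eigvals S)" unfolding S_def by (rule eigvals_finite)
  have Qin: "inner u (S *v u) = Q u" for u unfolding S_def Q_def by (rule quad_BBt)
  have linS: "linear (\<lambda>u. S *v u)" by (rule matrix_vector_mul_linear)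
  have symS: "\<And>x y. inner x (S *v y) = inner (S *v x) y" unfolding S_def by (rule sym_BBt)
  obtain e0 where e0: "e0 \<in> sphere 0 1" "\<And>y. y \<in> sphere 0 1 \<Longrightarrow> Q e0 \<le> Q y"
    using continuous_attains_inf[OF compact_sphere sne continuous_on_subset[OF Qc]] by blast
  have lb0: "Q e0 * norm u^2 \<le> Q u" for u by (rule scale) (use e0 in auto)
  have "S *v e0 = Q e0 *\<^sub>R e0"
    by (rule min_eigen[OF linS symS]) (use lb0 Qin e0(1) in auto)
  then have "Q e0 \<in> eigvals S" unfolding eigvals_def using e0(1) by (intro CollectI exI[of _ e0]) auto
  then have "rho_min S \<le> Q e0" unfolding rho_min_def using fin by simp
  then show "rho_min (B ** transpose B) * norm u^2 \<le> norm (transpose B *v u)^2" for u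
    using lb0[of u] unfolding S_def Q_def by (meson mult_right_mono order_trans zero_le_power2)
  obtain e1 where e1: "e1 \<in> sphere 0 1" "\<And>y. y \<in> sphere 0 1 \<Longrightarrow> Q y \<le> Q e1"
    using continuous_attains_sup[OF compact_sphere sne continuous_on_subset[OF Qc]] by blast
  have ub1: "Q u \<le> Q e1 * norm u^2" for u by (rule scale2) (use e1 in auto)
  have linN: "linear (\<lambda>u. - (S *v u))" using linS by (simp add: linear_compose_neg)
  have symN: "\<And>x y. inner x (- (S *v y)) = inner (- (S *v x)) y" using symS by simp
  have "- (S *v e1) = (- Q e1) *\<^sub>R e1"
    by (rule min_eigen[OF linN symN, of "- Q e1"]) (use ub1 Qin e1(1) in auto)
  then have "S *v e1 = Q e1 *\<^sub>R e1" by (metis minus_minus scaleR_minus_left)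
  then have "Q e1 \<in> eigvals S" unfolding eigvals_def using e1(1) by (intro CollectI exI[of _ e1]) auto
  then have rmax: "Q e1 \<le> rho_max S" unfolding rho_max_def using fin by simp
  have rpos: "rho_max S > 0"
  proof (rule ccontr)
    assume "\<not> rho_max S > 0"
    then have "1 / rho_max S \<le> 0" by (simp add: divide_le_0_iff)
    then show False using lam unfolding S_def by linarith
  qed
  have "lam * rho_max S < 1" using lam rpos unfolding S_def by (simp add: field_simps)
  show "lam * norm (transpose B *v u)^2 \<le> norm u^2" for u
  proof -
    have "Q e1 * norm u^2 \<le> rho_max S * norm u^2" by (rule mult_right_mono[OF rmax]) simp
    then have "Q u \<le> rho_max S * norm u^2" using ub1[of u] by linarith
    then have "lam * Q u \<le> lam * (rho_max S * norm u^2)"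
      using lam by (intro mult_left_mono) auto
    also have "\<dots> = (lam * rho_max S) * norm u^2" by simp
    also have "\<dots> \<le> 1 * norm u^2" using \<open>lam * rho_max S < 1\<close> by (intro mult_right_mono) auto
    finally show ?thesis unfolding Q_def by simp
  qed
qed

lemma step_alg:
  fixes \<gamma> lam s nD iDa nBa na nd nBd iad iBad :: real
  assumes g: "\<gamma> > 0" and l: "lam > 0" and s: "s = \<gamma> / lam"
    and i: "na \<le> (1 / s) * iDa + iad - lam * iBad"
    and r1: "lam * nBa - 2 * (lam * iBad) + lam * nBd \<le> na - 2 * iad + nd"
  shows "nD - 2 * \<gamma> * iDa + \<gamma>^2 * nBa + \<gamma>^2 / lam * na \<le> nD + \<gamma>^2 / lam * (nd - lam * nBd)"
proof -
  define br where "br = - 2 * ((1 / s) * iDa) + lam * nBa + na - nd + lam * nBd"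
  have br0: "br \<le> 0" unfolding br_def using i r1 by linarith
  have id: "nD - 2 * \<gamma> * iDa + \<gamma>^2 * nBa + \<gamma>^2 / lam * na = nD + \<gamma>^2 / lam * (nd - lam * nBd) + \<gamma>^2 / lam * br"
    unfolding br_def s using g l by (simp add: field_simps power2_eq_square)
  have "\<gamma>^2 / lam \<ge> 0" using l by simp
  then have "\<gamma>^2 / lam * br \<le> 0" using br0 by (rule mult_nonneg_nonpos)
  then show ?thesis unfolding id by simp
qed

lemma norm_add_le2:
  fixes u v :: "'a::real_inner"
  shows "norm (u + v)^2 \<le> 2 * norm u^2 + 2 * norm v^2"
proof -
  have "0 \<le> norm (u - v)^2" by simp
  moreover have "norm (u - v)^2 = norm u^2 - 2 * inner u v + norm v^2"
    by (simp add: power2_norm_eq_inner inner_diff_left inner_diff_right inner_commute algebra_simps)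
  ultimately show ?thesis unfolding norm_add_sq by linarith
qed

lemma dual_step:
  fixes f1 :: "real^'m \<Rightarrow> ereal" and B :: "real^'d^'m" and xs xh G :: "real^'d" and vs v :: "real^'m"
  assumes pr: "proper_fun f1" and cv: "ereal_convex f1" and ls: "lsc_ev f1"
    and g: "\<gamma> > 0" and l: "lam > 0" and lr: "lam < 1 / rho_max (B ** transpose B)"
    and vsfix: "vs = (let w = (lam / \<gamma>) *\<^sub>R (B *v (xs - \<gamma> *\<^sub>R G))
                        + (mat 1 - lam *\<^sub>R (B ** transpose B)) *v vs
                in w - prox (\<lambda>z. ereal (lam / \<gamma>) * f1 ((\<gamma> / lam) *\<^sub>R z)) w)"
    and xsfix: "xs = xs - \<gamma> *\<^sub>R G - \<gamma> *\<^sub>R (transpose B *v vs)"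
  defines "u \<equiv> B *v xh + (mat 1 - lam *\<^sub>R (B ** transpose B)) *v ((\<gamma> / lam) *\<^sub>R v)"
  defines "v' \<equiv> (lam / \<gamma>) *\<^sub>R (u - prox (\<lambda>z. ereal (\<gamma> / lam) * f1 z) u)"
  defines "x' \<equiv> xh - \<gamma> *\<^sub>R (transpose B *v v')"
  shows "norm (x' - xs)^2 + \<gamma>^2 / lam * norm (v' - vs)^2
         \<le> norm (xh - (xs - \<gamma> *\<^sub>R G))^2 + \<gamma>^2 / lam * (norm (v - vs)^2 - lam * norm (transpose B *v (v - vs))^2)"
proof -
  define s where "s = \<gamma> / lam"
  have s0: "s > 0" unfolding s_def using g l by simp
  have ls_inv: "lam / \<gamma> = 1 / s" unfolding s_def by simp
  define Bt where "Bt = transpose B"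
  define A where "A y = y - lam *\<^sub>R (B *v (Bt *v y))" for y
  have Aeq: "(mat 1 - lam *\<^sub>R (B ** transpose B)) *v y = A y" for y
    unfolding A_def Bt_def
    by (simp add: matrix_vector_mult_diff_rdistrib scaleR_matrix_vector_assoc[symmetric] matrix_vector_mul_assoc[symmetric])
  define w where "w = (1 / s) *\<^sub>R (B *v (xs - \<gamma> *\<^sub>R G)) + A vs"
  have vs2: "vs = w - prox (\<lambda>z. ereal (1 / s) * f1 (s *\<^sub>R z)) w"
    using vsfix unfolding w_def Let_def Aeq ls_inv s_def[symmetric] by simp
  have v'2: "v' = (1 / s) *\<^sub>R (u - prox (\<lambda>z. ereal s * f1 z) u)"
    unfolding v'_def ls_inv s_def[symmetric] ..
  have pm: "norm (v' - vs)^2 \<le> inner (v' - vs) ((1 / s) *\<^sub>R (u - s *\<^sub>R w))"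
    unfolding v'2 by (subst (1 2) vs2) (rule prox_mono[OF pr cv ls s0])
  define a where "a = v' - vs"
  define d where "d = v - vs"
  define D where "D = xh - (xs - \<gamma> *\<^sub>R G)"
  have Alin: "A y - A z = A (y - z)" for y z unfolding A_def by (simp add: algebra_simps)
  have Asc: "A (c *\<^sub>R y) = c *\<^sub>R A y" for c y unfolding A_def by (simp add: algebra_simps)
  have u2: "u = B *v xh + s *\<^sub>R A v" unfolding u_def Aeq s_def[symmetric] Asc ..
  have "u - s *\<^sub>R w = (B *v xh - B *v (xs - \<gamma> *\<^sub>R G)) + s *\<^sub>R (A v - A vs)"
    unfolding u2 w_def using s0 by (simp add: algebra_simps)
  also have "\<dots> = B *v D + s *\<^sub>R A d" unfolding D_def d_def Alin by (simp add: matrix_vector_mult_diff_distrib)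
  finally have usw: "(1 / s) *\<^sub>R (u - s *\<^sub>R w) = (1 / s) *\<^sub>R (B *v D) + A d" using s0 by (simp add: algebra_simps)
  have i1: "inner a ((1 / s) *\<^sub>R (B *v D) + A d) = (1 / s) * inner D (Bt *v a) + inner a d - lam * inner (Bt *v a) (Bt *v d)"
  proof -
    have "inner a (B *v D) = inner D (Bt *v a)" unfolding Bt_def by (subst inner_commute) (rule inner_Bv)
    moreover have "inner a (B *v (Bt *v d)) = inner (Bt *v a) (Bt *v d)"
    proof -
      have "inner a (B *v (Bt *v d)) = inner (Bt *v d) (Bt *v a)"
        unfolding Bt_def by (subst inner_commute) (rule inner_Bv)
      also have "\<dots> = inner (Bt *v a) (Bt *v d)" by (rule inner_commute)
      finally show ?thesis .
    qed
    ultimately show ?thesis unfolding A_def by (simp add: inner_add_right inner_diff_right)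
  qed
  have ineq_i: "norm a^2 \<le> (1 / s) * inner D (Bt *v a) + inner a d - lam * inner (Bt *v a) (Bt *v d)"
    using pm unfolding a_def[symmetric] usw i1 .
  have xdiff: "x' - xs = D - \<gamma> *\<^sub>R (Bt *v a)"
  proof -
    have "x' - xs = xh - \<gamma> *\<^sub>R (Bt *v v') - ((xs - \<gamma> *\<^sub>R G) - \<gamma> *\<^sub>R (Bt *v vs))"
      using xsfix unfolding x'_def Bt_def by (metis diff_diff_eq)
    also have "\<dots> = D - \<gamma> *\<^sub>R (Bt *v a)" unfolding D_def a_def by (simp add: matrix_vector_mult_diff_distrib algebra_simps)
    finally show ?thesis .
  qed
  have nds: "norm (y - z)^2 = norm y^2 - 2 * inner y z + norm z^2" for y z :: "real^'d"
    by (simp add: power2_norm_eq_inner inner_diff_left inner_diff_right inner_commute algebra_simps)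
  have nx: "norm (x' - xs)^2 = norm D^2 - 2 * \<gamma> * inner D (Bt *v a) + \<gamma>^2 * norm (Bt *v a)^2"
    unfolding xdiff nds by (simp add: power_mult_distrib)
  have R1: "lam * norm (Bt *v (a - d))^2 \<le> norm (a - d)^2"
    unfolding Bt_def by (rule spectral_bounds(1)[OF l lr])
  have nad: "norm (a - d)^2 = norm a^2 - 2 * inner a d + norm d^2"
    by (simp add: power2_norm_eq_inner inner_diff_left inner_diff_right inner_commute algebra_simps)
  have nBad: "norm (Bt *v (a - d))^2 = norm (Bt *v a)^2 - 2 * inner (Bt *v a) (Bt *v d) + norm (Bt *v d)^2"
    by (simp add: matrix_vector_mult_diff_distrib power2_norm_eq_inner inner_diff_left inner_diff_right inner_commute algebra_simps)
  have r1: "lam * norm (Bt *v a)^2 - 2 * (lam * inner (Bt *v a) (Bt *v d)) + lam * norm (Bt *v d)^2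
            \<le> norm a^2 - 2 * inner a d + norm d^2"
    using R1 unfolding nad nBad by (simp add: algebra_simps)
  have "norm D^2 - 2 * \<gamma> * inner D (Bt *v a) + \<gamma>^2 * norm (Bt *v a)^2 + \<gamma>^2 / lam * norm a^2
        \<le> norm D^2 + \<gamma>^2 / lam * (norm d^2 - lam * norm (Bt *v d)^2)"
    by (rule step_alg[OF g l s_def ineq_i r1])
  then have "norm (x' - xs)^2 + \<gamma>^2 / lam * norm a^2 \<le> norm D^2 + \<gamma>^2 / lam * (norm d^2 - lam * norm (Bt *v d)^2)"
    using nx by linarith
  then show ?thesis unfolding a_def d_def D_def Bt_def .
qed

lemma alg1_local:
  "(\<And>j. 1 \<le> j \<Longrightarrow> j < k \<Longrightarrow> idx j = idx' j) \<Longrightarrow>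
   alg1 f1 B gphi p \<nu> lam c \<alpha> x1 v1 idx k = alg1 f1 B gphi p \<nu> lam c \<alpha> x1 v1 idx' k"
proof (induction f1 B gphi p \<nu> lam c \<alpha> x1 v1 idx k rule: alg1.induct)
  case (3 f1 B gphi p \<nu> lam c \<alpha> x1 v1 idx k)
  have "alg1 f1 B gphi p \<nu> lam c \<alpha> x1 v1 idx (Suc k) = alg1 f1 B gphi p \<nu> lam c \<alpha> x1 v1 idx' (Suc k)"
    using 3 by simp
  moreover have "idx (Suc k) = idx' (Suc k)" using 3(2) by simp
  ultimately show ?case by simp
qed auto

lemma sum_PiE_insert:
  fixes H :: "('a \<Rightarrow> 'b) \<Rightarrow> real"
  assumes "finite J" "k \<notin> J" "finite T"
  shows "(\<Sum>s\<in>PiE (insert k J) (\<lambda>_. T). H s) = (\<Sum>s\<in>PiE J (\<lambda>_. T). \<Sum>i\<in>T. H (s(k := i)))"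
proof -
  have inj: "inj_on (\<lambda>(y, g). g(k := y)) (T \<times> PiE J (\<lambda>_. T))"
  proof (rule inj_onI)
    fix a b assume a: "a \<in> T \<times> PiE J (\<lambda>_. T)" "b \<in> T \<times> PiE J (\<lambda>_. T)"
      and eq: "(\<lambda>(y, g). g(k := y)) a = (\<lambda>(y, g). g(k := y)) b"
    obtain y1 g1 y2 g2 where ab: "a = (y1, g1)" "b = (y2, g2)" by (cases a, cases b)
    have e: "g1(k := y1) = g2(k := y2)" using eq ab by simp
    have "y1 = y2" using fun_cong[OF e, of k] by simp
    moreover have "g1 = g2"
    proof
      fix x show "g1 x = g2 x"
      proof (cases "x = k")
        case True
        then have "x \<notin> J" using assms(2) by simp
        then show ?thesis using a ab by (auto simp: PiE_def extensional_def)
      next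
        case False then show ?thesis using fun_cong[OF e, of x] by simp
      qed
    qed
    ultimately show "a = b" using ab by simp
  qed
  have "(\<Sum>s\<in>PiE (insert k J) (\<lambda>_. T). H s) = (\<Sum>s\<in>(\<lambda>(y, g). g(k := y)) ` (T \<times> PiE J (\<lambda>_. T)). H s)"
    by (simp add: PiE_insert_eq)
  also have "\<dots> = (\<Sum>yg\<in>T \<times> PiE J (\<lambda>_. T). H ((\<lambda>(y, g). g(k := y)) yg))"
    by (rule sum.reindex[OF inj, unfolded comp_def])
  also have "\<dots> = (\<Sum>(y, g)\<in>T \<times> PiE J (\<lambda>_. T). H (g(k := y)))"
    by (rule sum.cong) auto
  also have "\<dots> = (\<Sum>y\<in>T. \<Sum>g\<in>PiE J (\<lambda>_. T). H (g(k := y)))"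
    by (rule sum.cartesian_product[symmetric])
  also have "\<dots> = (\<Sum>g\<in>PiE J (\<lambda>_. T). \<Sum>y\<in>T. H (g(k := y)))"
    by (rule sum.swap)
  finally show ?thesis .
qed

lemma batch_sum:
  fixes f :: "nat \<Rightarrow> 'a::comm_monoid_add"
  shows "(\<Sum>i=1..N. \<Sum>j=(i-1)*p+1..i*p. f j) = (\<Sum>j=1..N*p. f j)"
proof (induction N)
  case 0 then show ?case by simp
next
  case (Suc N)
  have "(\<Sum>j=1..Suc N * p. f j) = (\<Sum>j=1..N*p + p. f j)" by (simp add: algebra_simps)
  also have "\<dots> = (\<Sum>j=1..N*p. f j) + (\<Sum>j=N*p+1..N*p + p. f j)"
    by (rule sum.ub_add_nat) simp
  finally show ?case using Suc by (simp add: algebra_simps)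
qed

lemma grad_l_avg:
  fixes gphi :: "nat \<Rightarrow> real^'d \<Rightarrow> real^'d"
  assumes "n = N * p" "p > 0" "N > 0"
  shows "(1 / real N) *\<^sub>R (\<Sum>i=1..N. grad_l_batch gphi p i x) = grad_l gphi n x"
proof -
  have "(\<Sum>i=1..N. grad_l_batch gphi p i x) = (1 / real p) *\<^sub>R (\<Sum>i=1..N. \<Sum>j=(i-1)*p+1..i*p. gphi j x)"
    unfolding grad_l_batch_def by (simp add: scaleR_sum_right)
  also have "\<dots> = (1 / real p) *\<^sub>R (\<Sum>j=1..n. gphi j x)" by (simp only: batch_sum assms(1))
  finally show ?thesis unfolding grad_l_def using assms by simp
qed

lemma convex_tangent:
  fixes \<phi> :: "'a::real_normed_vector \<Rightarrow> real"
  assumes cv: "convex_on UNIV \<phi>" and d: "(\<phi> has_derivative (\<lambda>h. g h)) (at x)" and lin: "linear g"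
  shows "\<phi> y \<ge> \<phi> x + g (y - x)"
proof -
  define \<psi> where "\<psi> t = \<phi> (x + t *\<^sub>R (y - x))" for t :: real
  have cvp: "convex_on UNIV \<psi>"
  proof (rule convex_onI)
    fix t a b :: real assume t: "0 < t" "t < 1"
    have "x + ((1 - t) *\<^sub>R a + t *\<^sub>R b) *\<^sub>R (y - x) = (1 - t) *\<^sub>R (x + a *\<^sub>R (y - x)) + t *\<^sub>R (x + b *\<^sub>R (y - x))"
      by (simp add: algebra_simps)
    then show "\<psi> ((1 - t) *\<^sub>R a + t *\<^sub>R b) \<le> (1 - t) * \<psi> a + t * \<psi> b"
      unfolding \<psi>_def using convex_onD[OF cv, of t] t by simp
  qed simp
  have d1: "((\<lambda>t. x + t *\<^sub>R (y - x)) has_derivative (\<lambda>h. h *\<^sub>R (y - x))) (at 0)"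
    by (auto intro!: derivative_eq_intros)
  have d0: "(\<phi> has_derivative g) (at (x + 0 *\<^sub>R (y - x)))" using d by simp
  have "((\<phi> \<circ> (\<lambda>t. x + t *\<^sub>R (y - x))) has_derivative (g \<circ> (\<lambda>h. h *\<^sub>R (y - x)))) (at 0)"
    by (rule diff_chain_at[OF d1 d0])
  moreover have "(g \<circ> (\<lambda>h. h *\<^sub>R (y - x))) = (\<lambda>h. g (y - x) * h)"
    using lin by (auto simp: fun_eq_iff linear_scale)
  ultimately have "(\<psi> has_derivative (\<lambda>h. g (y - x) * h)) (at 0)" unfolding \<psi>_def comp_def by simp
  then have "(\<psi> has_field_derivative g (y - x)) (at 0 within UNIV)"
    unfolding has_field_derivative_def by simp
  then have "\<psi> 1 - \<psi> 0 \<ge> g (y - x) * (1 - 0)"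
    by (intro convex_on_imp_above_tangent[OF cvp]) auto
  then show ?thesis unfolding \<psi>_def by simp
qed

lemma norm_diff_sq:
  fixes y z :: "'a::real_inner"
  shows "norm (y - z)^2 = norm y^2 - 2 * inner y z + norm z^2"
  by (simp add: power2_norm_eq_inner inner_diff_left inner_diff_right inner_commute algebra_simps)

lemma primal_avg:
  fixes e Gm :: "'a::real_inner" and Gi :: "nat \<Rightarrow> 'a" and N :: nat
  assumes N: "N > 0" and avg: "(1 / real N) *\<^sub>R (\<Sum>i=1..N. Gi i) = Gm"
    and mon: "\<nu> * norm e^2 \<le> inner e Gm"
    and bnd: "\<And>i. i \<in> {1..N} \<Longrightarrow> norm (Gi i)^2 \<le> M + 2 * \<nu>^2 * norm e^2"
    and g: "\<gamma> > 0" and gn: "\<gamma> * \<nu> \<le> 1/2" and nu: "\<nu> > 0"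
  shows "(1 / real N) * (\<Sum>i=1..N. norm (e - \<gamma> *\<^sub>R Gi i)^2) \<le> (1 - \<nu> * \<gamma>) * norm e^2 + \<gamma>^2 * M"
proof -
  have each: "norm (e - \<gamma> *\<^sub>R Gi i)^2 \<le> (norm e^2 + \<gamma>^2 * M + 2 * \<gamma>^2 * \<nu>^2 * norm e^2) - 2 * \<gamma> * inner e (Gi i)"
    if i: "i \<in> {1..N}" for i
  proof -
    have "norm (e - \<gamma> *\<^sub>R Gi i)^2 = norm e^2 - 2 * \<gamma> * inner e (Gi i) + \<gamma>^2 * norm (Gi i)^2"
      unfolding norm_diff_sq by (simp add: power_mult_distrib)
    moreover have "\<gamma>^2 * norm (Gi i)^2 \<le> \<gamma>^2 * (M + 2 * \<nu>^2 * norm e^2)"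
      using bnd[OF i] by (intro mult_left_mono) auto
    ultimately show ?thesis by (simp add: algebra_simps)
  qed
  have "(\<Sum>i=1..N. norm (e - \<gamma> *\<^sub>R Gi i)^2) \<le> (\<Sum>i=1..N. (norm e^2 + \<gamma>^2 * M + 2 * \<gamma>^2 * \<nu>^2 * norm e^2) - 2 * \<gamma> * inner e (Gi i))"
    by (rule sum_mono) (rule each)
  also have "\<dots> = real N * (norm e^2 + \<gamma>^2 * M + 2 * \<gamma>^2 * \<nu>^2 * norm e^2) - 2 * \<gamma> * inner e (\<Sum>i=1..N. Gi i)"
    by (simp add: sum_subtractf sum_distrib_left inner_sum_right)
  also have "inner e (\<Sum>i=1..N. Gi i) = real N * inner e Gm"
  proof -
    have "(\<Sum>i=1..N. Gi i) = real N *\<^sub>R Gm" using avg N by (auto simp: field_simps)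
    then show ?thesis by simp
  qed
  finally have S: "(\<Sum>i=1..N. norm (e - \<gamma> *\<^sub>R Gi i)^2) \<le> real N * ((norm e^2 + \<gamma>^2 * M + 2 * \<gamma>^2 * \<nu>^2 * norm e^2) - 2 * \<gamma> * inner e Gm)"
    by (simp add: algebra_simps)
  have "(1 / real N) * (\<Sum>i=1..N. norm (e - \<gamma> *\<^sub>R Gi i)^2) \<le> (norm e^2 + \<gamma>^2 * M + 2 * \<gamma>^2 * \<nu>^2 * norm e^2) - 2 * \<gamma> * inner e Gm"
    using S N by (simp add: field_simps)
  also have "\<dots> \<le> (norm e^2 + \<gamma>^2 * M + 2 * \<gamma>^2 * \<nu>^2 * norm e^2) - 2 * \<gamma> * (\<nu> * norm e^2)"
    using mon g by simp
  also have "\<dots> \<le> (1 - \<nu> * \<gamma>) * norm e^2 + \<gamma>^2 * M"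
  proof -
    have "2 * (\<gamma> * \<nu>) * (\<gamma> * \<nu>) \<le> 1 * (\<gamma> * \<nu>)" using gn g nu by (intro mult_right_mono) auto
    then have "2 * \<gamma>^2 * \<nu>^2 * norm e^2 \<le> \<gamma> * \<nu> * norm e^2"
      by (intro mult_right_mono) (auto simp: power2_eq_square algebra_simps)
    then show ?thesis by (simp add: algebra_simps)
  qed
  finally show ?thesis .
qed

lemma grad_batch_bound:
  fixes gphi :: "nat \<Rightarrow> real^'d \<Rightarrow> real^'d"
  assumes C: "\<forall>j\<in>{1..n}. \<forall>x. norm (gphi j x) \<le> C" and n: "n = N * p" and p: "p > 0" and i: "i \<in> {1..N}"
  shows "norm (grad_l_batch gphi p i x) \<le> C"
proof -
  define J where "J = {(i-1)*p+1..i*p}"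
  obtain i' where i': "i = Suc i'" using i by (cases i) auto
  have cJ: "card J = p" unfolding J_def i' by simp
  have Jsub: "J \<subseteq> {1..n}" unfolding J_def using i n by (auto intro: order_trans)
  have "norm (grad_l_batch gphi p i x) = (1 / real p) * norm (\<Sum>j\<in>J. gphi j x)"
    unfolding grad_l_batch_def J_def by simp
  also have "\<dots> \<le> (1 / real p) * (\<Sum>j\<in>J. norm (gphi j x))"
    by (intro mult_left_mono norm_sum) auto
  also have "\<dots> \<le> (1 / real p) * (real (card J) * C)"
    using C Jsub by (intro mult_left_mono sum_bounded_above) auto
  also have "\<dots> = C" using cJ p by simp
  finally show ?thesis .
qed

lemma grad_mono:
  fixes gphi :: "nat \<Rightarrow> real^'d \<Rightarrow> real^'d" and phi :: "nat \<Rightarrow> real^'d \<Rightarrow> real"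
  assumes phi_grad: "\<And>j x. j \<in> {1..n} \<Longrightarrow> (phi j has_derivative (\<lambda>h. gphi j x \<bullet> h)) (at x)"
    and phi_convex: "\<And>j. j \<in> {1..n} \<Longrightarrow> convex_on UNIV (phi j)"
  shows "inner (x - y) (grad_l gphi n x - grad_l gphi n y) \<ge> 0"
proof -
  have each: "inner (x - y) (gphi j x - gphi j y) \<ge> 0" if j: "j \<in> {1..n}" for j
  proof -
    have lx: "linear (\<lambda>h. gphi j x \<bullet> h)" by (simp add: linear_iff inner_add_right)
    have ly: "linear (\<lambda>h. gphi j y \<bullet> h)" by (simp add: linear_iff inner_add_right)
    have 1: "phi j y \<ge> phi j x + gphi j x \<bullet> (y - x)"
      by (rule convex_tangent[OF phi_convex[OF j] phi_grad[OF j] lx])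
    have 2: "phi j x \<ge> phi j y + gphi j y \<bullet> (x - y)"
      by (rule convex_tangent[OF phi_convex[OF j] phi_grad[OF j] ly])
    have "gphi j x \<bullet> (y - x) = - (inner (x - y) (gphi j x))" by (simp add: inner_commute inner_diff_left inner_diff_right)
    moreover have "gphi j y \<bullet> (x - y) = inner (x - y) (gphi j y)" by (simp add: inner_commute)
    ultimately show ?thesis using 1 2 by (simp add: inner_diff_right)
  qed
  have "inner (x - y) (grad_l gphi n x - grad_l gphi n y) = (1 / real n) * (\<Sum>j=1..n. inner (x - y) (gphi j x - gphi j y))"
    unfolding grad_l_def by (simp add: inner_diff_right inner_sum_right sum_subtractf diff_divide_distrib)
  also have "\<dots> \<ge> 0" using each by (intro mult_nonneg_nonneg sum_nonneg) auto
  finally show ?thesis .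
qed

theorem theorem4p4:
  fixes f1 :: "real^'m \<Rightarrow> ereal"
    and B :: "real^'d^'m"
    and phi :: "nat \<Rightarrow> real^'d \<Rightarrow> real"
    and gphi :: "nat \<Rightarrow> real^'d \<Rightarrow> real^'d"
    and n p :: nat
    and \<nu> M c \<alpha> lam :: real
    and xs x1 :: "real^'d"
    and vs v1 :: "real^'m"
    and k0 :: nat
    and P :: "'w measure"
    and I :: "nat \<Rightarrow> 'w \<Rightarrow> nat"
  defines "f2 \<equiv> (\<lambda>x. (1 / real n) * (\<Sum>j=1..n. phi j x) + \<nu> / 2 * norm x ^ 2)"
    and "gf2 \<equiv> (\<lambda>x. grad_l gphi n x + \<nu> *\<^sub>R x)"
    and "X \<equiv> (\<lambda>k \<omega>. alg1 f1 B gphi p \<nu> lam c \<alpha> x1 v1 (\<lambda>j. I j \<omega>) k)"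
  assumes f1_proper: "proper_fun f1" and f1_convex: "ereal_convex f1" and f1_lsc: "lsc f1"
    and B_rank: "rank B = CARD('m)"
    and n_pos: "0 < n" and p_pos: "0 < p" and p_dvd: "p dvd n"
    and \<nu>_pos: "\<nu> > 0"
    and phi_grad: "\<And>j x. j \<in> {1..n} \<Longrightarrow> (phi j has_derivative (\<lambda>h. gphi j x \<bullet> h)) (at x)"
    and phi_C1: "\<And>j. j \<in> {1..n} \<Longrightarrow> continuous_on UNIV (gphi j)"
    and phi_convex: "\<And>j. j \<in> {1..n} \<Longrightarrow> convex_on UNIV (phi j)"
    and grad_bdd: "\<exists>C. \<forall>j\<in>{1..n}. \<forall>x. norm (gphi j x) \<le> C"
    and M_bound: "4 * ((SUP i\<in>{1..n div p}. SUP x. norm (grad_l_batch gphi p i x) ^ 2)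
                        + norm (grad_l gphi n xs) ^ 2) \<le> M"
    and xs_min: "\<And>x. f1 (B *v xs) + ereal (f2 xs) \<le> f1 (B *v x) + ereal (f2 x)"
    and vs_fix1: "\<And>k. k \<ge> 1 \<Longrightarrow>
          vs = (let \<gamma> = gamma c \<alpha> k;
                    w = (lam / \<gamma>) *\<^sub>R (B *v (xs - \<gamma> *\<^sub>R gf2 xs))
                        + (mat 1 - lam *\<^sub>R (B ** transpose B)) *v vs
                in w - prox (\<lambda>z. ereal (lam / \<gamma>) * f1 ((\<gamma> / lam) *\<^sub>R z)) w)"
    and vs_fix2: "\<And>k. k \<ge> 1 \<Longrightarrow>
          xs = xs - gamma c \<alpha> k *\<^sub>R gf2 xs - gamma c \<alpha> k *\<^sub>R (transpose B *v vs)"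
    and c_pos: "c > 0" and \<alpha>_pos: "0 < \<alpha>" and \<alpha>_le: "\<alpha> \<le> 1"
    and lam_pos: "0 < lam" and lam_lt: "lam < 1 / rho_max (B ** transpose B)"
    and k0_pos: "k0 > 0"
    and k0_step: "gamma c \<alpha> k0 \<le> min (1 / (2 * \<nu>)) (lam * rho_min (B ** transpose B) / \<nu>)"
    and P_prob: "prob_space P"
    and I_indep: "prob_space.indep_vars P (\<lambda>_. count_space UNIV) I {1..}"
    and I_range: "\<And>k \<omega>. k \<ge> 1 \<Longrightarrow> \<omega> \<in> space P \<Longrightarrow> I k \<omega> \<in> {1..n div p}"
    and I_unif: "\<And>k i. k \<ge> 1 \<Longrightarrow> i \<in> {1..n div p} \<Longrightarrow>
                   measure P {\<omega> \<in> space P. I k \<omega> = i} = real p / real n"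
  shows "\<forall>k\<ge>k0.
     (\<integral>\<omega>. norm (fst (X (k+1) \<omega>) - xs)^2
            + (gamma c \<alpha> (k+1))^2 / lam * norm (snd (X (k+1) \<omega>) - vs)^2 \<partial>P)
     \<le> (1 - \<nu> * gamma c \<alpha> k) *
         (\<integral>\<omega>. norm (fst (X k \<omega>) - xs)^2
                + (gamma c \<alpha> k)^2 / lam * norm (snd (X k \<omega>) - vs)^2 \<partial>P)
       + (gamma c \<alpha> k)^2 * M"
proof (intro allI impI)
  fix k assume kk0: "k \<ge> k0"
  have k1: "k \<ge> 1" using kk0 k0_pos by simp
  have ls: "lsc_ev f1" by (rule lsc_imp_lsc_ev[OF f1_lsc])
  define N where "N = n div p"
  have nN: "n = N * p" using p_dvd unfolding N_def by simp
  have N0: "N > 0" using n_pos nN by (cases N) auto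
  define q where "q = real p / real n"
  have qN: "q = 1 / real N" unfolding q_def using nN p_pos by simp
  have q0: "q \<ge> 0" unfolding q_def by simp
  define \<gamma> where "\<gamma> = gamma c \<alpha> k"
  have gpos: "\<gamma> > 0" unfolding \<gamma>_def gamma_def using c_pos k1 by simp
  have gle_mono: "gamma c \<alpha> j2 \<le> gamma c \<alpha> j1" if "1 \<le> j1" "j1 \<le> j2" for j1 j2
  proof -
    have "real j1 powr \<alpha> \<le> real j2 powr \<alpha>" using that \<alpha>_pos by (intro powr_mono2) auto
    moreover have "real j1 powr \<alpha> > 0" "real j2 powr \<alpha> > 0" using that by auto
    ultimately show ?thesis unfolding gamma_def using c_pos by (intro divide_left_mono) auto
  qed
  have g'le: "gamma c \<alpha> (k + 1) \<le> \<gamma>" unfolding \<gamma>_def using k1 by (intro gle_mono) auto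
  have g'pos: "gamma c \<alpha> (k + 1) > 0" unfolding gamma_def using c_pos by simp
  have gk0: "\<gamma> \<le> gamma c \<alpha> k0" unfolding \<gamma>_def using k0_pos kk0 by (intro gle_mono) auto
  have gn: "\<gamma> * \<nu> \<le> 1 / 2"
  proof -
    have "\<gamma> \<le> 1 / (2 * \<nu>)" using gk0 k0_step by simp
    then show ?thesis using \<nu>_pos by (simp add: field_simps)
  qed
  have gr: "\<nu> * \<gamma> \<le> lam * rho_min (B ** transpose B)"
  proof -
    have "\<gamma> \<le> lam * rho_min (B ** transpose B) / \<nu>" using gk0 k0_step by simp
    then show ?thesis using \<nu>_pos by (simp add: field_simps)
  qed
  have spec2: "rho_min (B ** transpose B) * norm u^2 \<le> norm (transpose B *v u)^2" for u
    by (rule spectral_bounds(2)[OF lam_pos lam_lt])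
  obtain C where C: "\<forall>j\<in>{1..n}. \<forall>x. norm (gphi j x) \<le> C" using grad_bdd by blast
  have gbC: "norm (grad_l_batch gphi p i x) \<le> C" if "i \<in> {1..N}" for i x
    by (rule grad_batch_bound[OF C nN p_pos that])
  have gbsup: "norm (grad_l_batch gphi p i x)^2 \<le> (SUP i\<in>{1..n div p}. SUP x. norm (grad_l_batch gphi p i x) ^ 2)"
    if i: "i \<in> {1..N}" for i x
  proof -
    have C0: "C \<ge> 0" using gbC[OF i, of x] norm_ge_zero order_trans by blast
    have bdd: "bdd_above (range (\<lambda>x. norm (grad_l_batch gphi p i x) ^ 2))"
      by (rule bdd_aboveI[of _ "C^2"]) (use gbC[OF i] in \<open>auto intro: power_mono\<close>)
    have "norm (grad_l_batch gphi p i x)^2 \<le> (SUP x. norm (grad_l_batch gphi p i x) ^ 2)"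
      by (rule cSUP_upper[OF UNIV_I bdd])
    also have "\<dots> \<le> (SUP i\<in>{1..n div p}. SUP x. norm (grad_l_batch gphi p i x) ^ 2)"
      using i unfolding N_def by (intro cSUP_upper) (auto intro: bdd_above_finite)
    finally show ?thesis .
  qed
  define \<Phi> where "\<Phi> j z = norm (fst z - xs)^2 + (gamma c \<alpha> j)^2 / lam * norm (snd z - vs)^2" for j z
  have step: "q * (\<Sum>i\<in>{1..N}. \<Phi> (k + 1) (alg1_step f1 B gphi p \<nu> lam c \<alpha> k i z))
              \<le> (1 - \<nu> * \<gamma>) * \<Phi> k z + \<gamma>^2 * M" for z
  proof -
    obtain x v where z: "z = (x, v)" by (cases z)
    define xh where "xh i = x - \<gamma> *\<^sub>R (grad_l_batch gphi p i x + \<nu> *\<^sub>R x)" for i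
    define u where "u i = B *v xh i + (mat 1 - lam *\<^sub>R (B ** transpose B)) *v ((\<gamma> / lam) *\<^sub>R v)" for i
    define v' where "v' i = (lam / \<gamma>) *\<^sub>R (u i - prox (\<lambda>z. ereal (\<gamma> / lam) * f1 z) (u i))" for i
    define x' where "x' i = xh i - \<gamma> *\<^sub>R (transpose B *v v' i)" for i
    have alg: "alg1_step f1 B gphi p \<nu> lam c \<alpha> k i (x, v) = (x' i, v' i)" for i
      unfolding alg1_step_def Let_def x'_def v'_def u_def xh_def \<gamma>_def by simp
    define e where "e = x - xs"
    define d where "d = v - vs"
    define Gi where "Gi i = grad_l_batch gphi p i x + \<nu> *\<^sub>R x - gf2 xs" for i
    have Dform: "xh i - (xs - \<gamma> *\<^sub>R gf2 xs) = e - \<gamma> *\<^sub>R Gi i" for i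
      unfolding xh_def e_def Gi_def by (simp add: algebra_simps)
    have vsf: "vs = (let w = (lam / \<gamma>) *\<^sub>R (B *v (xs - \<gamma> *\<^sub>R gf2 xs))
                        + (mat 1 - lam *\<^sub>R (B ** transpose B)) *v vs
                in w - prox (\<lambda>z. ereal (lam / \<gamma>) * f1 ((\<gamma> / lam) *\<^sub>R z)) w)"
      using vs_fix1[OF k1] unfolding \<gamma>_def by (simp only: Let_def)
    have xsf: "xs = xs - \<gamma> *\<^sub>R gf2 xs - \<gamma> *\<^sub>R (transpose B *v vs)"
      using vs_fix2[OF k1] unfolding \<gamma>_def .
    have ds: "norm (x' i - xs)^2 + \<gamma>^2 / lam * norm (v' i - vs)^2
         \<le> norm (xh i - (xs - \<gamma> *\<^sub>R gf2 xs))^2 + \<gamma>^2 / lam * (norm (v - vs)^2 - lam * norm (transpose B *v (v - vs))^2)" for i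
      unfolding x'_def v'_def u_def by (rule dual_step[OF f1_proper f1_convex ls gpos lam_pos lam_lt vsf xsf])
    have dterm: "norm (v - vs)^2 - lam * norm (transpose B *v (v - vs))^2 \<le> (1 - \<nu> * \<gamma>) * norm d^2"
    proof -
      have "lam * (rho_min (B ** transpose B) * norm d^2) \<le> lam * norm (transpose B *v d)^2"
        using spec2[of d] lam_pos by (intro mult_left_mono) auto
      moreover have "\<nu> * \<gamma> * norm d^2 \<le> lam * rho_min (B ** transpose B) * norm d^2"
        using gr by (intro mult_right_mono) auto
      ultimately show ?thesis unfolding d_def by (simp add: algebra_simps)
    qed
    have g2: "(gamma c \<alpha> (k + 1))^2 \<le> \<gamma>^2" using g'le g'pos by (intro power_mono) auto
    have each: "\<Phi> (k + 1) (x' i, v' i) \<le> norm (e - \<gamma> *\<^sub>R Gi i)^2 + (1 - \<nu> * \<gamma>) * (\<gamma>^2 / lam * norm d^2)" for i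
    proof -
      have "(gamma c \<alpha> (k + 1))^2 / lam * norm (v' i - vs)^2 \<le> \<gamma>^2 / lam * norm (v' i - vs)^2"
        using g2 lam_pos by (intro mult_right_mono divide_right_mono) auto
      then have "\<Phi> (k + 1) (x' i, v' i) \<le> norm (x' i - xs)^2 + \<gamma>^2 / lam * norm (v' i - vs)^2"
        unfolding \<Phi>_def by simp
      also have "\<dots> \<le> norm (e - \<gamma> *\<^sub>R Gi i)^2 + \<gamma>^2 / lam * (norm (v - vs)^2 - lam * norm (transpose B *v (v - vs))^2)"
        using ds[of i] unfolding Dform .
      also have "\<dots> \<le> norm (e - \<gamma> *\<^sub>R Gi i)^2 + \<gamma>^2 / lam * ((1 - \<nu> * \<gamma>) * norm d^2)"
        using dterm lam_pos by (intro add_left_mono mult_left_mono) auto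
      also have "\<gamma>^2 / lam * ((1 - \<nu> * \<gamma>) * norm d^2) = (1 - \<nu> * \<gamma>) * (\<gamma>^2 / lam * norm d^2)"
        by (rule mult.left_commute)
      finally show ?thesis .
    qed
    have sumle: "(\<Sum>i\<in>{1..N}. \<Phi> (k + 1) (x' i, v' i)) \<le> (\<Sum>i\<in>{1..N}. norm (e - \<gamma> *\<^sub>R Gi i)^2) + real N * ((1 - \<nu> * \<gamma>) * (\<gamma>^2 / lam * norm d^2))"
    proof -
      have "(\<Sum>i\<in>{1..N}. \<Phi> (k + 1) (x' i, v' i)) \<le> (\<Sum>i\<in>{1..N}. norm (e - \<gamma> *\<^sub>R Gi i)^2 + (1 - \<nu> * \<gamma>) * (\<gamma>^2 / lam * norm d^2))"
        by (rule sum_mono) (rule each)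
      also have "\<dots> = (\<Sum>i\<in>{1..N}. norm (e - \<gamma> *\<^sub>R Gi i)^2) + real N * ((1 - \<nu> * \<gamma>) * (\<gamma>^2 / lam * norm d^2))"
        by (simp add: sum.distrib)
      finally show ?thesis .
    qed
    have avg: "(1 / real N) *\<^sub>R (\<Sum>i=1..N. Gi i) = gf2 x - gf2 xs"
    proof -
      have "(\<Sum>i=1..N. Gi i) = (\<Sum>i=1..N. grad_l_batch gphi p i x + (\<nu> *\<^sub>R x - gf2 xs))"
        unfolding Gi_def by (simp only: add_diff_eq)
      also have "\<dots> = (\<Sum>i=1..N. grad_l_batch gphi p i x) + (\<Sum>i=1..N. (\<nu> *\<^sub>R x - gf2 xs))"
        by (rule sum.distrib)
      also have "(\<Sum>i=1..N. (\<nu> *\<^sub>R x - gf2 xs)) = real N *\<^sub>R (\<nu> *\<^sub>R x - gf2 xs)"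
        by (simp only: sum_constant_scaleR card_atLeastAtMost) simp
      finally have "(\<Sum>i=1..N. Gi i) = (\<Sum>i=1..N. grad_l_batch gphi p i x) + real N *\<^sub>R (\<nu> *\<^sub>R x - gf2 xs)" .
      then have "(1 / real N) *\<^sub>R (\<Sum>i=1..N. Gi i) = grad_l gphi n x + (\<nu> *\<^sub>R x - gf2 xs)"
        using grad_l_avg[OF nN p_pos N0, of gphi x] N0 by (simp add: scaleR_add_right)
      then show ?thesis unfolding gf2_def by (simp add: algebra_simps)
    qed
    have mon: "\<nu> * norm e^2 \<le> inner e (gf2 x - gf2 xs)"
    proof -
      have "gf2 x - gf2 xs = (grad_l gphi n x - grad_l gphi n xs) + \<nu> *\<^sub>R e"
        unfolding gf2_def e_def by (simp add: algebra_simps)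
      then have "inner e (gf2 x - gf2 xs) = inner (x - xs) (grad_l gphi n x - grad_l gphi n xs) + \<nu> * norm e^2"
        unfolding e_def by (simp add: inner_add_right power2_norm_eq_inner)
      moreover have "inner (x - xs) (grad_l gphi n x - grad_l gphi n xs) \<ge> 0"
        by (rule grad_mono[OF phi_grad phi_convex])
      ultimately show ?thesis by simp
    qed
    have bnd: "norm (Gi i)^2 \<le> M + 2 * \<nu>^2 * norm e^2" if i: "i \<in> {1..N}" for i
    proof -
      have "Gi i = (grad_l_batch gphi p i x + (- grad_l gphi n xs)) + \<nu> *\<^sub>R e"
        unfolding Gi_def gf2_def e_def by (simp add: algebra_simps)
      then have "norm (Gi i)^2 \<le> 2 * norm (grad_l_batch gphi p i x + (- grad_l gphi n xs))^2 + 2 * norm (\<nu> *\<^sub>R e)^2"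
        using norm_add_le2 by metis
      also have "norm (grad_l_batch gphi p i x + (- grad_l gphi n xs))^2 \<le> 2 * norm (grad_l_batch gphi p i x)^2 + 2 * norm (grad_l gphi n xs)^2"
        using norm_add_le2[of "grad_l_batch gphi p i x" "- grad_l gphi n xs"] by simp
      also have "norm (\<nu> *\<^sub>R e)^2 = \<nu>^2 * norm e^2" by (simp add: power_mult_distrib)
      finally have "norm (Gi i)^2 \<le> 4 * (norm (grad_l_batch gphi p i x)^2 + norm (grad_l gphi n xs)^2) + 2 * \<nu>^2 * norm e^2"
        by simp
      also have "\<dots> \<le> 4 * ((SUP i\<in>{1..n div p}. SUP x. norm (grad_l_batch gphi p i x) ^ 2) + norm (grad_l gphi n xs)^2) + 2 * \<nu>^2 * norm e^2"
        using gbsup[OF i, of x] by simp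
      also have "\<dots> \<le> M + 2 * \<nu>^2 * norm e^2" using M_bound by simp
      finally show ?thesis .
    qed
    have prim: "(1 / real N) * (\<Sum>i=1..N. norm (e - \<gamma> *\<^sub>R Gi i)^2) \<le> (1 - \<nu> * \<gamma>) * norm e^2 + \<gamma>^2 * M"
      by (rule primal_avg[OF N0 avg mon bnd gpos gn \<nu>_pos])
    have "q * (\<Sum>i\<in>{1..N}. \<Phi> (k + 1) (alg1_step f1 B gphi p \<nu> lam c \<alpha> k i z))
          = q * (\<Sum>i\<in>{1..N}. \<Phi> (k + 1) (x' i, v' i))" unfolding z alg ..
    also have "\<dots> \<le> q * ((\<Sum>i\<in>{1..N}. norm (e - \<gamma> *\<^sub>R Gi i)^2) + real N * ((1 - \<nu> * \<gamma>) * (\<gamma>^2 / lam * norm d^2)))"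
      using sumle q0 by (rule mult_left_mono)
    also have "\<dots> = (1 / real N) * (\<Sum>i=1..N. norm (e - \<gamma> *\<^sub>R Gi i)^2) + (1 - \<nu> * \<gamma>) * (\<gamma>^2 / lam * norm d^2)"
      unfolding qN using N0 by (simp add: algebra_simps)
    also have "\<dots> \<le> (1 - \<nu> * \<gamma>) * norm e^2 + \<gamma>^2 * M + (1 - \<nu> * \<gamma>) * (\<gamma>^2 / lam * norm d^2)"
      using prim by simp
    also have "\<dots> = (1 - \<nu> * \<gamma>) * \<Phi> k z + \<gamma>^2 * M"
      unfolding \<Phi>_def z e_def d_def \<gamma>_def by (simp add: algebra_simps)
    finally show ?thesis .
  qed

  show "(\<integral>\<omega>. norm (fst (X (k+1) \<omega>) - xs)^2
            + (gamma c \<alpha> (k+1))^2 / lam * norm (snd (X (k+1) \<omega>) - vs)^2 \<partial>P)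
     \<le> (1 - \<nu> * gamma c \<alpha> k) *
         (\<integral>\<omega>. norm (fst (X k \<omega>) - xs)^2
                + (gamma c \<alpha> k)^2 / lam * norm (snd (X k \<omega>) - vs)^2 \<partial>P)
       + (gamma c \<alpha> k)^2 * M"
  proof -
    have XR: "X j \<omega> = alg1 f1 B gphi p \<nu> lam c \<alpha> x1 v1 (restrict (\<lambda>i. I i \<omega>) {1..<j}) j" for j \<omega>
      unfolding X_def by (rule alg1_local) simp
    define H where "H j s = \<Phi> j (alg1 f1 B gphi p \<nu> lam c \<alpha> x1 v1 s j)" for j s
    define S where "S j = PiE {1..<j::nat} (\<lambda>_. {1..N})" for j
    have ER: "(\<integral>\<omega>. H j (restrict (\<lambda>i. I i \<omega>) {1..<j}) \<partial>P) = q ^ card {1..<j} * (\<Sum>s\<in>S j. H j s)" for j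
      unfolding q_def N_def S_def
      by (rule expect_restrict[OF P_prob I_indep I_range I_unif]) auto
    have L1: "(\<integral>\<omega>. norm (fst (X (k+1) \<omega>) - xs)^2
            + (gamma c \<alpha> (k+1))^2 / lam * norm (snd (X (k+1) \<omega>) - vs)^2 \<partial>P)
          = (\<integral>\<omega>. H (k+1) (restrict (\<lambda>i. I i \<omega>) {1..<k+1}) \<partial>P)"
      by (rule Bochner_Integration.integral_cong[OF refl]) (simp only: H_def \<Phi>_def XR)
    have R1: "(\<integral>\<omega>. norm (fst (X k \<omega>) - xs)^2
                + (gamma c \<alpha> k)^2 / lam * norm (snd (X k \<omega>) - vs)^2 \<partial>P)
          = (\<integral>\<omega>. H k (restrict (\<lambda>i. I i \<omega>) {1..<k}) \<partial>P)"
      by (rule Bochner_Integration.integral_cong[OF refl]) (simp only: H_def \<Phi>_def XR)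
    obtain k' where k': "k = Suc k'" using k1 by (cases k) auto
    have ins: "{1..<k+1} = insert k {1..<k}" using k1 by auto
    have Hstep: "H (k+1) (s(k := i)) = \<Phi> (k+1) (alg1_step f1 B gphi p \<nu> lam c \<alpha> k i (alg1 f1 B gphi p \<nu> lam c \<alpha> x1 v1 s k))"
      for s i
    proof -
      have "alg1 f1 B gphi p \<nu> lam c \<alpha> x1 v1 (s(k := i)) k = alg1 f1 B gphi p \<nu> lam c \<alpha> x1 v1 s k"
        by (rule alg1_local) simp
      then show ?thesis unfolding H_def k' by simp
    qed
    have cardS: "card (S k) = N ^ (k - 1)" unfolding S_def by (simp add: card_PiE)
    have Sk1: "(\<Sum>s\<in>S (k+1). H (k+1) s) = (\<Sum>s\<in>S k. \<Sum>i\<in>{1..N}. H (k+1) (s(k := i)))"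
      unfolding S_def ins by (rule sum_PiE_insert) auto
    have "(\<integral>\<omega>. H (k+1) (restrict (\<lambda>i. I i \<omega>) {1..<k+1}) \<partial>P)
          = q ^ k * (\<Sum>s\<in>S k. \<Sum>i\<in>{1..N}. \<Phi> (k+1) (alg1_step f1 B gphi p \<nu> lam c \<alpha> k i (alg1 f1 B gphi p \<nu> lam c \<alpha> x1 v1 s k)))"
      unfolding ER Sk1 Hstep by simp
    also have "\<dots> = q ^ (k - 1) * (\<Sum>s\<in>S k. q * (\<Sum>i\<in>{1..N}. \<Phi> (k+1) (alg1_step f1 B gphi p \<nu> lam c \<alpha> k i (alg1 f1 B gphi p \<nu> lam c \<alpha> x1 v1 s k))))"
      unfolding k' by (simp add: sum_distrib_left mult_ac)
    also have "\<dots> \<le> q ^ (k - 1) * (\<Sum>s\<in>S k. (1 - \<nu> * \<gamma>) * \<Phi> k (alg1 f1 B gphi p \<nu> lam c \<alpha> x1 v1 s k) + \<gamma>^2 * M)"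
      using q0 by (intro mult_left_mono sum_mono step) auto
    also have "\<dots> = q ^ (k - 1) * ((1 - \<nu> * \<gamma>) * (\<Sum>s\<in>S k. H k s) + real (card (S k)) * (\<gamma>^2 * M))"
      unfolding H_def by (simp add: sum.distrib sum_distrib_left[symmetric])
    also have "\<dots> = (1 - \<nu> * \<gamma>) * (q ^ (k - 1) * (\<Sum>s\<in>S k. H k s)) + \<gamma>^2 * M * (q ^ (k - 1) * real (card (S k)))"
      by (simp add: algebra_simps)
    also have "q ^ (k - 1) * real (card (S k)) = 1"
      unfolding cardS qN using N0 by (simp add: power_one_over)
    also have "q ^ (k - 1) * (\<Sum>s\<in>S k. H k s) = (\<integral>\<omega>. H k (restrict (\<lambda>i. I i \<omega>) {1..<k}) \<partial>P)"
      unfolding ER by simp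
    finally have F: "(\<integral>\<omega>. H (k+1) (restrict (\<lambda>i. I i \<omega>) {1..<k+1}) \<partial>P)
      \<le> (1 - \<nu> * \<gamma>) * (\<integral>\<omega>. H k (restrict (\<lambda>i. I i \<omega>) {1..<k}) \<partial>P) + \<gamma>^2 * M * 1" .
    show ?thesis unfolding L1 R1 using F unfolding \<gamma>_def mult_1_right .
  qed

qed

end
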